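(* Let $n\ge2$, $m\ge1$, let $V$ be a finite-dimensional complex vector space, let $\rho\colon B_m\to\mathrm{GL}(V)$ be a representation and let $q\in\mathbf{C}^*$. Then there is a representation $\rho'\colon B_{n,m}\to\mathrm{GL}(V)$ with $\rho'(\sigma_i)=1$ for $i=1,\dots,n-1$, $\rho'(\sigma_n^2)=q$, and $\rho'(\sigma_{n+i})=\rho(\sigma_i)$ for $i=1,\dots,m-1$. Set $\rho^{(m)}=\rho'$ and, for $j=m,m-1,\dots,1$, let $\rho^{(j-1)}=(\rho^{(j)})^+$ be the representation of $B_{n,j-1}$ obtained from the representation $\rho^{(j)}$ of $B_{n,j}$ by the construction described in the context. Then $\rho^+_q:=\rho^{(0)}$ is a representation of $B_{n,0}=B_n$ on $V^{\oplus k}$, where $k=(n+m-1)(n+m-2)\cdots(n+1)n$. This gives a one-parameter family of representations $\rho^+_q$, $q\in\mathbf{C}^*$.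
   Context: For $N\ge2$ the braid group $B_N$ has generators $\sigma_1,\dots,\sigma_{N-1}$ with relations $\sigma_i\sigma_j=\sigma_j\sigma_i$ for $|i-j|>1$ and $\sigma_i\sigma_j\sigma_i=\sigma_j\sigma_i\sigma_j$ for $|i-j|=1$ ($B_1$ is trivial). Let $F_N$ be free on $g_1,\dots,g_N$; $F_N\rtimes B_N$ is generated by $F_N$ and $B_N$ subject to the additional relations $g_{i+1}\sigma_i=\sigma_i g_i$, $g_i\sigma_i=\sigma_i g_i g_{i+1}g_i^{-1}$, $g_j\sigma_i=\sigma_i g_j$ for $j\notin\{i,i+1\}$. With $R_i=\begin{bmatrix}0&g_i\\1&1-g_i\end{bmatrix}$, $\phi$ is the homomorphism from $B_N$ to invertible $N\times N$ matrices over $\mathbf{Z}[F_N\rtimes B_N]$ given by $\phi(\sigma_i)=\sigma_i\cdot\mathrm{diag}(I_{i-1},R_i,I_{N-i-1})$ (scalar $\sigma_i$ multiplying each entry on the left). $B_{n,j}\subset B_{n+j}$ is the subgroup of braids in which the first $n$ bottom endpoints are connected to the first $n$ top endpoints; it is generated by $\sigma_1,\dots,\sigma_{n-1},\sigma_n^2,\sigma_{n+1},\dots,\sigma_{n+j-1}$, and $B_{n,0}=B_n$. $B_{n,j-1}$ is a subgroup of $B_{n,j}$ by adding a straight last strand. $F_{n+j-1}$ is identified with the subgroup of $B_{n,j}$ of braids whose first $n+j-1$ strands are straight, freely generated by $g_i=(\sigma_{n+j-1}\cdots\sigma_{i+1})\sigma_i^2(\sigma_{n+j-1}\cdots\sigma_{i+1})^{-1}$,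 $i=1,\dots,n+j-1$, and the subgroup of $B_{n,j}$ generated by $B_{n,j-1}$ and $F_{n+j-1}$ is identified with the subgroup $F_{n+j-1}\rtimes B_{n,j-1}$ of $F_{n+j-1}\rtimes B_{n+j-1}$. Construction: given a representation $\tau$ of $B_{n,j}$ on $W$, $\tau^+\colon B_{n,j-1}\to\mathrm{GL}(W^{\oplus(n+j-1)})$ sends $\beta$ to the block matrix whose $(k,l)$ block is $\tau(\phi(\beta)_{kl})$, with $\tau$ restricted to $F_{n+j-1}\rtimes B_{n,j-1}$ and extended linearly to the group ring (this is a representation of $B_{n,j-1}$). *)

theory Defs
  imports "Jordan_Normal_Form.Matrix"
begin

text \<open>A braid word is a list of letters (i, True) = sigma_i and (i, False) = sigma_i^{-1}.\<close>
type_synonym bword = "(nat \<times> bool) list"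

definition bwords :: "nat \<Rightarrow> bword set" where
  "bwords N = {w. \<forall>x\<in>set w. 1 \<le> fst x \<and> fst x < N}"

inductive beq :: "nat \<Rightarrow> bword \<Rightarrow> bword \<Rightarrow> bool" for N where
  refl: "beq N u u"
| sym: "beq N u v \<Longrightarrow> beq N v u"
| trans: "beq N u v \<Longrightarrow> beq N v w \<Longrightarrow> beq N u w"
| ctxt: "beq N u v \<Longrightarrow> beq N (x @ u @ y) (x @ v @ y)"
| cancel: "1 \<le> i \<Longrightarrow> i < N \<Longrightarrow> beq N [(i, b), (i, \<not> b)] []"
| comm: "1 \<le> i \<Longrightarrow> i < N \<Longrightarrow> 1 \<le> j \<Longrightarrow> j < N \<Longrightarrow> i + 1 < j \<Longrightarrow>
          beq N [(i, True), (j, True)] [(j, True), (i, True)]"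
| braid: "1 \<le> i \<Longrightarrow> i + 1 < N \<Longrightarrow>
          beq N [(i, True), (i + 1, True), (i, True)] [(i + 1, True), (i, True), (i + 1, True)]"

definition swp :: "nat \<Rightarrow> nat \<Rightarrow> nat" where
  "swp i x = (if x = i then i + 1 else if x = i + 1 then i else x)"

fun bperm :: "bword \<Rightarrow> nat \<Rightarrow> nat" where
  "bperm [] = id"
| "bperm (x # w) = swp (fst x) \<circ> bperm w"

text \<open>B_{n,j} inside B_{n+j}: braids connecting the first n bottom endpoints to the first n top
  endpoints. B_{n,j-1} sits in B_{n,j} by adding a straight last strand, i.e. as the same words.\<close>
definition Bnj :: "nat \<Rightarrow> nat \<Rightarrow> bword set" where
  "Bnj n j = {w \<in> bwords (n + j). bperm w ` {1..n} = {1..n}}"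

text \<open>A representation of the group (of classes of words in the subgroup G of B_N) on C^d:
  a multiplicative map into d x d complex matrices, constant on braid classes.\<close>
definition is_rep :: "bword set \<Rightarrow> nat \<Rightarrow> nat \<Rightarrow> (bword \<Rightarrow> complex mat) \<Rightarrow> bool" where
  "is_rep G N d r \<longleftrightarrow>
     (\<forall>w\<in>G. r w \<in> carrier_mat d d) \<and> r [] = one_mat d \<and>
     (\<forall>u\<in>G. \<forall>v\<in>G. r (u @ v) = r u * r v) \<and>
     (\<forall>u\<in>G. \<forall>v\<in>G. beq N u v \<longrightarrow> r u = r v)"

text \<open>Elements of the group ring, as formal integer combinations of words (words of
  F_N x| B_N already mapped into B_{N+1} via the identification of the context).\<close>
type_synonym gring = "(int \<times> bword) list"

definition gr_mult :: "gring \<Rightarrow> gring \<Rightarrow> gring" where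
  "gr_mult xs ys = concat (map (\<lambda>(c, u). map (\<lambda>(e, v). (c * e, u @ v)) ys) xs)"

definition gr_lmul :: "bword \<Rightarrow> gring \<Rightarrow> gring" where
  "gr_lmul u xs = map (\<lambda>(c, v). (c, u @ v)) xs"

definition gr_rmul :: "gring \<Rightarrow> bword \<Rightarrow> gring" where
  "gr_rmul xs u = map (\<lambda>(c, v). (c, v @ u)) xs"

type_synonym grmat = "nat \<Rightarrow> nat \<Rightarrow> gring"

definition gm_mult :: "nat \<Rightarrow> grmat \<Rightarrow> grmat \<Rightarrow> grmat" where
  "gm_mult N A B k l = concat (map (\<lambda>p. gr_mult (A k p) (B p l)) [0..<N])"

definition gm_one :: grmat where
  "gm_one k l = (if k = l then [(1, [])] else [])"

definition gword :: "nat \<Rightarrow> nat \<Rightarrow> bool \<Rightarrow> bword" where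
  "gword N i b = map (\<lambda>k. (k, True)) (rev [i + 1..<N + 1]) @ [(i, b), (i, b)]
                 @ map (\<lambda>k. (k, False)) [i + 1..<N + 1]"

text \<open>phi(sigma_i) = sigma_i . diag(I, R_i, I) with R_i = [[0, g_i], [1, 1 - g_i]];
  phi(sigma_i^{-1}) = phi(sigma_i)^{-1} = diag(I, R_i^{-1}, I) . sigma_i^{-1} with
  R_i^{-1} = [[1 - g_i^{-1}, 1], [g_i^{-1}, 0]].  Rows/columns are 0-based, so R_i sits at
  positions i-1, i.\<close>
definition Dmat :: "nat \<Rightarrow> nat \<Rightarrow> grmat" where
  "Dmat N i k l =
     (if k = i - 1 \<and> l = i - 1 then []
      else if k = i - 1 \<and> l = i then [(1, gword N i True)]
      else if k = i \<and> l = i - 1 then [(1, [])]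
      else if k = i \<and> l = i then [(1, []), (-1, gword N i True)]
      else if k = l then [(1, [])] else [])"

definition Dinv :: "nat \<Rightarrow> nat \<Rightarrow> grmat" where
  "Dinv N i k l =
     (if k = i - 1 \<and> l = i - 1 then [(1, []), (-1, gword N i False)]
      else if k = i - 1 \<and> l = i then [(1, [])]
      else if k = i \<and> l = i - 1 then [(1, gword N i False)]
      else if k = i \<and> l = i then []
      else if k = l then [(1, [])] else [])"

definition phi_gen :: "nat \<Rightarrow> nat \<times> bool \<Rightarrow> grmat" where
  "phi_gen N x k l =
     (if snd x then gr_lmul [(fst x, True)] (Dmat N (fst x) k l)
      else gr_rmul (Dinv N (fst x) k l) [(fst x, False)])"

fun phi :: "nat \<Rightarrow> bword \<Rightarrow> grmat" where
  "phi N [] = gm_one"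
| "phi N (x # w) = gm_mult N (phi_gen N x) (phi N w)"

definition tau_lin :: "nat \<Rightarrow> (bword \<Rightarrow> complex mat) \<Rightarrow> gring \<Rightarrow> complex mat" where
  "tau_lin d \<tau> xs = foldr (\<lambda>(c, w) acc. smult_mat (of_int c) (\<tau> w) + acc) xs (zero_mat d d)"

text \<open>tau a representation of B_{n,j} on C^d, N = n + j - 1; tau^+(beta) is the N x N block
  matrix (blocks of size d) whose (k,l) block is tau(phi(beta)_{kl}).\<close>
definition rep_plus :: "nat \<Rightarrow> nat \<Rightarrow> (bword \<Rightarrow> complex mat) \<Rightarrow> bword \<Rightarrow> complex mat" where
  "rep_plus N d \<tau> \<beta> =
     mat (N * d) (N * d)
       (\<lambda>(a, b). tau_lin d \<tau> (phi N \<beta> (a div d) (b div d)) $$ (a mod d, b mod d))"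

text \<open>Iterating: starting from a representation of B_{n,j} on C^d, apply the construction j
  times; returns (dimension, representation of B_{n,0}).\<close>
fun iter_plus :: "nat \<Rightarrow> nat \<Rightarrow> (bword \<Rightarrow> complex mat) \<Rightarrow> nat \<Rightarrow> nat \<times> (bword \<Rightarrow> complex mat)" where
  "iter_plus n d \<tau> 0 = (d, \<tau>)"
| "iter_plus n d \<tau> (Suc j) = iter_plus n ((n + j) * d) (rep_plus (n + j) d \<tau>) j"

definition rho_prime_props ::
  "nat \<Rightarrow> nat \<Rightarrow> nat \<Rightarrow> complex \<Rightarrow> (bword \<Rightarrow> complex mat) \<Rightarrow> (bword \<Rightarrow> complex mat) \<Rightarrow> bool" where
  "rho_prime_props n m d q \<rho> \<rho>' \<longleftrightarrow>
     is_rep (Bnj n m) (n + m) d \<rho>' \<and>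
     (\<forall>i\<in>{1..<n}. \<rho>' [(i, True)] = one_mat d) \<and>
     \<rho>' [(n, True), (n, True)] = smult_mat q (one_mat d) \<and>
     (\<forall>i\<in>{1..<m}. \<rho>' [(n + i, True)] = \<rho> [(i, True)])"

end

theory Submission
  imports Defs
begin



lemma beq_equiv_trans[trans]: "beq M u v \<Longrightarrow> beq M v w \<Longrightarrow> beq M u w"
  by (rule beq.trans)

lemma beq_cx: "beq M u v \<Longrightarrow> beq M (x @ u @ y) (x @ v @ y)"
  by (rule beq.ctxt)
lemma beq_appR: "beq M u v \<Longrightarrow> beq M (u @ y) (v @ y)"
  using beq.ctxt[of M u v "[]" y] by simp
lemma beq_appL: "beq M u v \<Longrightarrow> beq M (x @ u) (x @ v)"
  using beq.ctxt[of M u v x "[]"] by simp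
lemma beq_app2: "beq M u v \<Longrightarrow> beq M u' v' \<Longrightarrow> beq M (u @ u') (v @ v')"
  by (meson beq.trans beq_appL beq_appR)
lemma beq_Cons: "beq M u v \<Longrightarrow> beq M (a # u) (a # v)"
  using beq_appL[of M u v "[a]"] by simp

definition flip :: "nat \<times> bool \<Rightarrow> nat \<times> bool" where "flip x = (fst x, \<not> snd x)"
definition winv :: "bword \<Rightarrow> bword" where "winv w = rev (map flip w)"

lemma winv_simps[simp]: "winv [] = []" "winv (a # w) = winv w @ [flip a]"
  "winv (u @ v) = winv v @ winv u" "winv (winv w) = w"
  by (auto simp: winv_def flip_def rev_map[symmetric] comp_def)

lemma flip_simp[simp]: "flip (i, b) = (i, \<not> b)" "flip (flip x) = x" by (auto simp: flip_def)

lemma bwords_simps[simp]: "[] \<in> bwords M" "(a # w \<in> bwords M) = (1 \<le> fst a \<and> fst a < M \<and> w \<in> bwords M)"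
  "(u @ v \<in> bwords M) = (u \<in> bwords M \<and> v \<in> bwords M)"
  by (auto simp: bwords_def)

lemma winv_bwords[simp]: "(winv w \<in> bwords M) = (w \<in> bwords M)"
  by (induction w) (auto simp: flip_def)

lemma beq_cancel': "1 \<le> fst a \<Longrightarrow> fst a < M \<Longrightarrow> beq M [a, flip a] []"
  by (cases a) (auto intro: beq.cancel)

lemma beq_winv_right: "w \<in> bwords M \<Longrightarrow> beq M (w @ winv w) []"
proof (induction w)
  case Nil then show ?case by (simp add: beq.refl)
next
  case (Cons a w)
  have "beq M (a # w @ winv w @ [flip a]) ([a] @ [] @ [flip a])"
    using beq_cx[OF Cons.IH[of], of "[a]" "[flip a]"] Cons.prems by simp
  also have "beq M ([a] @ [] @ [flip a]) []" using beq_cancel'[of a M] Cons.prems by simp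
  finally show ?case by simp
qed

lemma beq_winv_left: "w \<in> bwords M \<Longrightarrow> beq M (winv w @ w) []"
  using beq_winv_right[of "winv w" M] by simp

lemma beq_flip_comm:
  assumes "beq M [x, y] [y, x]" "1 \<le> fst x" "fst x < M"
  shows "beq M [flip x, y] [y, flip x]"
proof -
  have "beq M [flip x, y] [flip x, y, x, flip x]"
    using beq_appL[OF beq.sym[OF beq_cancel'[of x M]], of "[flip x, y]"] assms by simp
  also have "beq M [flip x, y, x, flip x] [flip x, x, y, flip x]"
    using beq_cx[OF beq.sym[OF assms(1)], of "[flip x]" "[flip x]"] by simp
  also have "beq M [flip x, x, y, flip x] [y, flip x]"
    using beq_appR[OF beq_cancel'[of "flip x" M], of "[y, flip x]"] assms by (simp add: flip_def)
  finally show ?thesis by simp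
qed

lemma beq_comm_gen:
  assumes "1 \<le> i" "i < M" "1 \<le> j" "j < M" "i + 1 < j \<or> j + 1 < i"
  shows "beq M [(i, b), (j, c)] [(j, c), (i, b)]"
proof -
  have pp: "beq M [(i, True), (j, True)] [(j, True), (i, True)]"
    using assms(5) proof
    assume "i + 1 < j" then show ?thesis using assms by (intro beq.comm) auto
  next
    assume "j + 1 < i" then show ?thesis using assms by (intro beq.sym[OF beq.comm]) auto
  qed
  have pp': "beq M [(j, True), (i, True)] [(i, True), (j, True)]"
    using pp by (rule beq.sym)
  have np: "beq M [(i, c'), (j, True)] [(j, True), (i, c')]" for c'
    using pp beq_flip_comm[OF pp] assms by (cases c') auto
  have np': "beq M [(j, c'), (i, True)] [(i, True), (j, c')]" for c'
    using pp' beq_flip_comm[OF pp'] assms by (cases c') auto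
  have "beq M [(j, c), (i, b')] [(i, b'), (j, c)]" for b'
  proof (cases b')
    case True then show ?thesis using np' by simp
  next
    case False
    have "beq M [(j, c), (i, True)] [(i, True), (j, c)]" by (rule np')
    then have "beq M [(i, True), (j, c)] [(j, c), (i, True)]" by (rule beq.sym)
    from beq_flip_comm[OF this] assms False show ?thesis by (auto intro: beq.sym)
  qed
  then show ?thesis by (rule beq.sym)
qed

lemma beq_move_right:
  assumes "\<forall>z\<in>set w. beq M [x, z] [z, x]"
  shows "beq M (x # w) (w @ [x])"
  using assms
proof (induction w)
  case Nil then show ?case by (simp add: beq.refl)
next
  case (Cons z w)
  have "beq M (x # z # w) (z # x # w)" using beq_appR[of M "[x,z]" "[z,x]" w] Cons.prems by simp
  also have "beq M (z # (x # w)) (z # (w @ [x]))" using beq_Cons Cons by simp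
  finally show ?case by simp
qed

lemma beq_move_left:
  assumes "\<forall>z\<in>set w. beq M [x, z] [z, x]"
  shows "beq M (w @ [x]) (x # w)"
  using beq_move_right[OF assms] by (rule beq.sym)

definition cw :: "nat \<Rightarrow> nat \<Rightarrow> bword" where
  "cw N k = map (\<lambda>m. (m, True)) (rev [k + 1..<N + 1])"

lemma gword_cw: "gword N i b = cw N i @ [(i, b), (i, b)] @ winv (cw N i)"
  by (simp add: gword_def cw_def winv_def rev_map comp_def)

lemma gword_False: "gword N i False = winv (gword N i True)"
  by (simp add: gword_cw flip_def)

lemma cw_bwords: "cw N k \<in> bwords (Suc N)"
  by (auto simp: cw_def bwords_def)

lemma gword_bwords: "1 \<le> i \<Longrightarrow> i \<le> N \<Longrightarrow> gword N i b \<in> bwords (Suc N)"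
  by (auto simp: gword_cw cw_bwords)

lemma set_cw: "set (cw N k) = {(m, True) | m. k < m \<and> m \<le> N}"
  by (auto simp: cw_def)

lemma cw_split: "k < N \<Longrightarrow> cw N k = cw N (Suc k) @ [(Suc k, True)]"
proof -
  assume "k < N"
  then have "[k + 1..<N + 1] = (k+1) # [Suc k + 1..<N + 1]" by (simp add: upt_rec)
  then show ?thesis by (simp add: cw_def)
qed

lemma beq_letter_word:
  assumes "1 \<le> l" "l < M" "\<forall>z\<in>set w. 1 \<le> fst z \<and> fst z < M \<and> (l + 1 < fst z \<or> fst z + 1 < l)"
  shows "\<forall>z\<in>set w. beq M [(l, b), z] [z, (l, b)]"
  using assms beq_comm_gen by (metis prod.collapse)




lemma step_ins: "1 \<le> i \<Longrightarrow> i < M \<Longrightarrow> beq M (x @ y) (x @ (i,b) # (i,\<not>b) # y)"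
  using beq_cx[OF beq.sym[OF beq.cancel[of i M b]], of x y] by simp
lemma step_del: "1 \<le> i \<Longrightarrow> i < M \<Longrightarrow> beq M (x @ (i,b) # (i,\<not>b) # y) (x @ y)"
  using beq_cx[OF beq.cancel[of i M b], of x y] by simp
lemma step_braidF: "1 \<le> i \<Longrightarrow> Suc i < M \<Longrightarrow>
   beq M (x @ (i,True) # (Suc i,True) # (i,True) # y) (x @ (Suc i, True) # (i,True) # (Suc i,True) # y)"
  using beq_cx[OF beq.braid[of i M], of x y] by simp
lemma step_braidB: "1 \<le> i \<Longrightarrow> Suc i < M \<Longrightarrow>
   beq M (x @ (Suc i, True) # (i,True) # (Suc i,True) # y) (x @ (i,True) # (Suc i,True) # (i,True) # y)"
  using beq_cx[OF beq.sym[OF beq.braid[of i M]], of x y] by simp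

lemma R1_core: assumes h: "1 \<le> i" "Suc i < M" shows "beq M [(Suc i, True), (Suc i, True), (i, True)] [(i, True), (Suc i, True), (i, True), (i, True), (Suc i, False)]"
proof -
  have "beq M [(Suc i, True), (Suc i, True), (i, True)] [(Suc i, True), (Suc i, True), (i, True), (Suc i, True), (Suc i, False)]" using step_ins[where i="Suc i" and M=M and x="[(Suc i, True), (Suc i, True), (i, True)]" and y="[]" and b=True] h by simp
  also have "beq M [(Suc i, True), (Suc i, True), (i, True), (Suc i, True), (Suc i, False)] [(Suc i, True), (i, True), (Suc i, True), (i, True), (Suc i, False)]" using step_braidB[where i=i and M=M and x="[(Suc i, True)]" and y="[(Suc i, False)]"] h by simp
  also have "beq M [(Suc i, True), (i, True), (Suc i, True), (i, True), (Suc i, False)] [(i, True), (Suc i, True), (i, True), (i, True), (Suc i, False)]" using step_braidB[where i=i and M=M and x="[]" and y="[(i, True), (Suc i, False)]"] h by simp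
  finally show ?thesis .
qed

lemma R2_core: assumes h: "1 \<le> i" "Suc i < M" shows "beq M [(Suc i, True), (i, True), (i, True), (Suc i, False), (i, True)] [(i, True), (Suc i, True), (i, True), (i, True), (Suc i, True), (Suc i, True), (i, False), (i, False), (Suc i, False)]"
proof -
  have "beq M [(Suc i, True), (i, True), (i, True), (Suc i, False), (i, True)] [(Suc i, True), (i, True), (i, True), (Suc i, False), (i, True), (Suc i, True), (Suc i, False)]" using step_ins[where i="Suc i" and M=M and x="[(Suc i, True), (i, True), (i, True), (Suc i, False), (i, True)]" and y="[]" and b=True] h by simp
  also have "beq M [(Suc i, True), (i, True), (i, True), (Suc i, False), (i, True), (Suc i, True), (Suc i, False)] [(Suc i, True), (i, True), (i, True), (Suc i, False), (i, True), (Suc i, True), (i, True), (i, False), (Suc i, False)]" using step_ins[where i=i and M=M and x="[(Suc i, True), (i, True), (i, True), (Suc i, False), (i, True), (Suc i, True)]" and y="[(Suc i, False)]" and b=True] h by simp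
  also have "beq M [(Suc i, True), (i, True), (i, True), (Suc i, False), (i, True), (Suc i, True), (i, True), (i, False), (Suc i, False)] [(Suc i, True), (i, True), (i, True), (Suc i, False), (Suc i, True), (i, True), (Suc i, True), (i, False), (Suc i, False)]" using step_braidF[where i=i and M=M and x="[(Suc i, True), (i, True), (i, True), (Suc i, False)]" and y="[(i, False), (Suc i, False)]"] h by simp
  also have "beq M [(Suc i, True), (i, True), (i, True), (Suc i, False), (Suc i, True), (i, True), (Suc i, True), (i, False), (Suc i, False)] [(Suc i, True), (i, True), (i, True), (i, True), (Suc i, True), (i, False), (Suc i, False)]" using step_del[where i="Suc i" and M=M and x="[(Suc i, True), (i, True), (i, True)]" and y="[(i, True), (Suc i, True), (i, False), (Suc i, False)]" and b=False] h by simp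
  also have "beq M [(Suc i, True), (i, True), (i, True), (i, True), (Suc i, True), (i, False), (Suc i, False)] [(Suc i, True), (i, True), (i, True), (i, True), (Suc i, True), (i, True), (i, False), (i, False), (Suc i, False)]" using step_ins[where i=i and M=M and x="[(Suc i, True), (i, True), (i, True), (i, True), (Suc i, True)]" and y="[(i, False), (Suc i, False)]" and b=True] h by simp
  also have "beq M [(Suc i, True), (i, True), (i, True), (i, True), (Suc i, True), (i, True), (i, False), (i, False), (Suc i, False)] [(Suc i, True), (i, True), (i, True), (Suc i, True), (i, True), (Suc i, True), (i, False), (i, False), (Suc i, False)]" using step_braidF[where i=i and M=M and x="[(Suc i, True), (i, True), (i, True)]" and y="[(i, False), (i, False), (Suc i, False)]"] h by simp
  also have "beq M [(Suc i, True), (i, True), (i, True), (Suc i, True), (i, True), (Suc i, True), (i, False), (i, False), (Suc i, False)] [(Suc i, True), (i, True), (Suc i, True), (i, True), (Suc i, True), (Suc i, True), (i, False), (i, False), (Suc i, False)]" using step_braidF[where i=i and M=M and x="[(Suc i, True), (i, True)]" and y="[(Suc i, True), (i, False), (i, False), (Suc i, False)]"] h by simp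
  also have "beq M [(Suc i, True), (i, True), (Suc i, True), (i, True), (Suc i, True), (Suc i, True), (i, False), (i, False), (Suc i, False)] [(i, True), (Suc i, True), (i, True), (i, True), (Suc i, True), (Suc i, True), (i, False), (i, False), (Suc i, False)]" using step_braidB[where i=i and M=M and x="[]" and y="[(i, True), (Suc i, True), (Suc i, True), (i, False), (i, False), (Suc i, False)]"] h by simp
  finally show ?thesis .
qed


lemma cw_decomp: "k + 1 \<le> l \<Longrightarrow> l + 1 \<le> N \<Longrightarrow>
  cw N k = cw N (Suc l) @ [(Suc l, True), (l, True)] @ map (\<lambda>m. (m, True)) (rev [k+1..<l])"
proof -
  assume a: "k + 1 \<le> l" "l + 1 \<le> N"
  have "[k+1..<N+1] = [k+1..<l] @ [l..<N+1]"
    using upt_add_eq_append[of "k+1" l "N+1-l"] a by simp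
  moreover have "[l..<N+1] = l # Suc l # [Suc (Suc l)..<N+1]" using a by (simp add: upt_conv_Cons)
  ultimately show ?thesis by (simp add: cw_def)
qed

lemma cw_shift:
  assumes "k + 1 \<le> l" "l + 1 \<le> N"
  shows "beq (Suc N) (cw N k @ [(Suc l, True)]) ((l, True) # cw N k)"
proof -
  define P where "P = cw N (Suc l)"
  define Q where "Q = map (\<lambda>m. (m, True)) (rev [k+1..<l])"
  have c: "cw N k = P @ [(Suc l, True), (l, True)] @ Q" using cw_decomp[OF assms] by (simp add: P_def Q_def)
  have Qc: "\<forall>z\<in>set Q. beq (Suc N) [(Suc l, True), z] [z, (Suc l, True)]"
    by (rule beq_letter_word) (use assms in \<open>auto simp: Q_def\<close>)
  have Pc: "\<forall>z\<in>set P. beq (Suc N) [(l, True), z] [z, (l, True)]"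
    by (rule beq_letter_word) (use assms in \<open>auto simp: P_def set_cw\<close>)
  have "beq (Suc N) (cw N k @ [(Suc l, True)]) ((P @ [(Suc l, True), (l, True)]) @ (Q @ [(Suc l, True)]) @ [])"
    by (simp add: c beq.refl)
  also have "beq (Suc N) \<dots> ((P @ [(Suc l, True), (l, True)]) @ ((Suc l, True) # Q) @ [])"
    by (rule beq_cx[OF beq_move_left[OF Qc]])
  also have "beq (Suc N) \<dots> (P @ [(l, True), (Suc l, True), (l, True)] @ Q)"
    using step_braidB[of l "Suc N" P Q] assms by simp
  also have "beq (Suc N) \<dots> ([] @ (P @ [(l, True)]) @ [(Suc l, True), (l, True)] @ Q)"
    by simp (rule beq.refl)
  also have "beq (Suc N) \<dots> ([] @ ((l, True) # P) @ [(Suc l, True), (l, True)] @ Q)"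
    by (rule beq_cx[OF beq_move_left[OF Pc]])
  finally show ?thesis by (simp add: c)
qed

lemma beq_conj_move:
  assumes "beq M (p @ u) (v @ p)" "p \<in> bwords M"
  shows "beq M (winv p @ v) (u @ winv p)"
proof -
  have "beq M (winv p @ v) (winv p @ v @ p @ winv p)"
    using beq_cx[OF beq.sym[OF beq_winv_right[OF assms(2)]], of "winv p @ v" "[]"] by simp
  also have "beq M (winv p @ v @ p @ winv p) (winv p @ p @ u @ winv p)"
    using beq_cx[OF beq.sym[OF assms(1)], of "winv p" "winv p"] by simp
  also have "beq M (winv p @ p @ u @ winv p) (u @ winv p)"
    using beq_cx[OF beq_winv_left[OF assms(2)], of "[]" "u @ winv p"] by simp
  finally show ?thesis .
qed

lemma R3:
  assumes k: "1 \<le> k" "k \<le> N" and l: "1 \<le> l" "l < N" and kl: "l + 1 < k \<or> k + 1 \<le> l"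
  shows "beq (Suc N) (gword N k True @ [(l, True)]) ((l, True) # gword N k True)"
  using kl
proof
  assume a: "l + 1 < k"
  have "\<forall>z\<in>set (gword N k True). beq (Suc N) [(l, True), z] [z, (l, True)]"
    by (rule beq_letter_word) (use a k l in \<open>auto simp: gword_cw set_cw winv_def flip_def\<close>)
  then show ?thesis by (rule beq_move_left)
next
  assume a: "k + 1 \<le> l"
  define c where "c = cw N k"
  have cb: "c \<in> bwords (Suc N)" by (simp add: c_def cw_bwords)
  have s1: "beq (Suc N) (c @ [(Suc l, True)]) ([(l, True)] @ c)"
    using cw_shift[of k l N] a l by (simp add: c_def)
  have s2: "beq (Suc N) (winv c @ [(l, True)]) ([(Suc l, True)] @ winv c)"
    by (rule beq_conj_move[OF s1 cb])
  have cm: "\<forall>z\<in>set [(k, True), (k, True)]. beq (Suc N) [(Suc l, True), z] [z, (Suc l, True)]"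
    by (rule beq_letter_word) (use a k l in auto)
  have "beq (Suc N) (gword N k True @ [(l, True)]) ((c @ [(k,True),(k,True)]) @ (winv c @ [(l, True)]) @ [])"
    by (simp add: gword_cw c_def beq.refl)
  also have "beq (Suc N) \<dots> ((c @ [(k,True),(k,True)]) @ ([(Suc l, True)] @ winv c) @ [])"
    by (rule beq_cx[OF s2])
  also have "beq (Suc N) \<dots> (c @ ([(k,True),(k,True)] @ [(Suc l, True)]) @ winv c)"
    by simp (rule beq.refl)
  also have "beq (Suc N) \<dots> (c @ ((Suc l, True) # [(k,True),(k,True)]) @ winv c)"
    by (rule beq_cx[OF beq_move_left[OF cm]])
  also have "beq (Suc N) \<dots> ([] @ (c @ [(Suc l, True)]) @ [(k,True),(k,True)] @ winv c)"
    by simp (rule beq.refl)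
  also have "beq (Suc N) \<dots> ([] @ ([(l, True)] @ c) @ [(k,True),(k,True)] @ winv c)"
    by (rule beq_cx[OF s1])
  finally show ?thesis by (simp add: gword_cw c_def)
qed

lemma R1:
  assumes i: "1 \<le> i" "Suc i \<le> N"
  shows "beq (Suc N) (gword N (Suc i) True @ [(i, True)]) ((i, True) # gword N i True)"
proof -
  define P where "P = cw N (Suc i)"
  have Pb: "P \<in> bwords (Suc N)" by (simp add: P_def cw_bwords)
  have ci: "cw N i = P @ [(Suc i, True)]" using cw_split[of i N] i by (simp add: P_def)
  have c1: "\<forall>z\<in>set (winv P). beq (Suc N) [(i, True), z] [z, (i, True)]"
    by (rule beq_letter_word) (use i in \<open>auto simp: P_def set_cw winv_def flip_def\<close>)
  have c2: "\<forall>z\<in>set P. beq (Suc N) [(i, True), z] [z, (i, True)]"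
    by (rule beq_letter_word) (use i in \<open>auto simp: P_def set_cw\<close>)
  have "beq (Suc N) (gword N (Suc i) True @ [(i, True)]) ((P @ [(Suc i,True),(Suc i,True)]) @ (winv P @ [(i, True)]) @ [])"
    by (simp add: gword_cw P_def beq.refl)
  also have "beq (Suc N) \<dots> ((P @ [(Suc i,True),(Suc i,True)]) @ ((i, True) # winv P) @ [])"
    by (rule beq_cx[OF beq_move_left[OF c1]])
  also have "beq (Suc N) \<dots> (P @ [(Suc i,True),(Suc i,True),(i, True)] @ winv P)"
    by simp (rule beq.refl)
  also have "beq (Suc N) \<dots> (P @ [(i, True), (Suc i, True), (i, True), (i, True), (Suc i, False)] @ winv P)"
    by (rule beq_cx[OF R1_core]) (use i in auto)
  also have "beq (Suc N) \<dots> ([] @ (P @ [(i, True)]) @ [(Suc i, True), (i, True), (i, True), (Suc i, False)] @ winv P)"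
    by simp (rule beq.refl)
  also have "beq (Suc N) \<dots> ([] @ ((i, True) # P) @ [(Suc i, True), (i, True), (i, True), (Suc i, False)] @ winv P)"
    by (rule beq_cx[OF beq_move_left[OF c2]])
  finally show ?thesis by (simp add: gword_cw ci)
qed

lemma R2:
  assumes i: "1 \<le> i" "Suc i \<le> N"
  shows "beq (Suc N) (gword N i True @ [(i, True)])
          ((i, True) # gword N i True @ gword N (Suc i) True @ gword N i False)"
proof -
  define P where "P = cw N (Suc i)"
  have Pb: "P \<in> bwords (Suc N)" by (simp add: P_def cw_bwords)
  have ci: "cw N i = P @ [(Suc i, True)]" using cw_split[of i N] i by (simp add: P_def)
  have c1: "\<forall>z\<in>set (winv P). beq (Suc N) [(i, True), z] [z, (i, True)]"
    by (rule beq_letter_word) (use i in \<open>auto simp: P_def set_cw winv_def flip_def\<close>)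
  have c2: "\<forall>z\<in>set P. beq (Suc N) [(i, True), z] [z, (i, True)]"
    by (rule beq_letter_word) (use i in \<open>auto simp: P_def set_cw\<close>)
  have wl: "beq (Suc N) (winv P @ P) []" by (rule beq_winv_left[OF Pb])
  let ?A = "(i, True)" and ?a = "(i, False)" and ?B = "(Suc i, True)" and ?b = "(Suc i, False)"
  have "beq (Suc N) (gword N i True @ [(i, True)]) ((P @ [?B, ?A, ?A, ?b]) @ (winv P @ [?A]) @ [])"
    by (simp add: gword_cw ci beq.refl)
  also have "beq (Suc N) \<dots> ((P @ [?B, ?A, ?A, ?b]) @ (?A # winv P) @ [])"
    by (rule beq_cx[OF beq_move_left[OF c1]])
  also have "beq (Suc N) \<dots> (P @ [?B, ?A, ?A, ?b, ?A] @ winv P)"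
    by simp (rule beq.refl)
  also have "beq (Suc N) \<dots> (P @ [?A, ?B, ?A, ?A, ?B, ?B, ?a, ?a, ?b] @ winv P)"
    by (rule beq_cx[OF R2_core]) (use i in auto)
  also have "beq (Suc N) \<dots> ((P @ [?A, ?B, ?A, ?A, ?b]) @ [] @ [?B, ?B, ?B, ?a, ?a, ?b] @ winv P)"
    using step_ins[of "Suc i" "Suc N" "P @ [?A, ?B, ?A, ?A]" "[?B, ?B, ?a, ?a, ?b] @ winv P" False] i
    by simp
  also have "beq (Suc N) \<dots> ((P @ [?A, ?B, ?A, ?A, ?b]) @ (winv P @ P) @ [?B, ?B, ?B, ?a, ?a, ?b] @ winv P)"
    by (rule beq_cx[OF beq.sym[OF wl]])
  also have "beq (Suc N) \<dots> ((P @ [?A, ?B, ?A, ?A, ?b] @ winv P @ P @ [?B, ?B]) @ [] @ [?B, ?a, ?a, ?b] @ winv P)"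
    by simp (rule beq.refl)
  also have "beq (Suc N) \<dots> ((P @ [?A, ?B, ?A, ?A, ?b] @ winv P @ P @ [?B, ?B]) @ (winv P @ P) @ [?B, ?a, ?a, ?b] @ winv P)"
    by (rule beq_cx[OF beq.sym[OF wl]])
  also have "beq (Suc N) \<dots> ([] @ (P @ [?A]) @ [?B, ?A, ?A, ?b] @ winv P @ P @ [?B, ?B] @ winv P @ P @ [?B, ?a, ?a, ?b] @ winv P)"
    by simp (rule beq.refl)
  also have "beq (Suc N) \<dots> ([] @ (?A # P) @ [?B, ?A, ?A, ?b] @ winv P @ P @ [?B, ?B] @ winv P @ P @ [?B, ?a, ?a, ?b] @ winv P)"
    by (rule beq_cx[OF beq_move_left[OF c2]])
  finally show ?thesis by (simp add: gword_cw ci P_def[symmetric])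
qed




definition lin :: "(bword \<Rightarrow> complex) \<Rightarrow> gring \<Rightarrow> complex" where
  "lin f A = sum_list (map (\<lambda>(c, w). of_int c * f w) A)"

lemma lin_simps[simp]: "lin f [] = 0" "lin f ((c, w) # A) = of_int c * f w + lin f A"
  "lin f (A @ B) = lin f A + lin f B"
  by (auto simp: lin_def)

lemma lin_concat: "lin f (concat xs) = sum_list (map (lin f) xs)"
  by (induction xs) auto

lemma lin_map_mult: "lin f (map (\<lambda>(e, v). (c * e, u @ v)) B) = of_int c * lin (\<lambda>v. f (u @ v)) B"
  by (induction B) (auto simp: algebra_simps)

lemma lin_gr_mult: "lin f (gr_mult A B) = lin (\<lambda>u. lin (\<lambda>v. f (u @ v)) B) A"
  by (induction A) (auto simp: gr_mult_def lin_map_mult)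

lemma lin_gr_lmul: "lin f (gr_lmul u A) = lin (\<lambda>v. f (u @ v)) A"
  by (induction A) (auto simp: gr_lmul_def)

lemma lin_gr_rmul: "lin f (gr_rmul A u) = lin (\<lambda>v. f (v @ u)) A"
  by (induction A) (auto simp: gr_rmul_def)

lemma lin_sum: "lin (\<lambda>a. \<Sum>q\<in>S. F q a) A = (\<Sum>q\<in>S. lin (F q) A)"
  by (induction A) (auto simp: sum_distrib_left sum.distrib)

lemma lin_cong: assumes "\<And>w. f w = g w" shows "lin f A = lin g A"
proof -
  have "f = g" using assms by (rule ext)
  then show ?thesis by simp
qed

lemma lin_gm: "lin f (gm_mult N A B k l) = (\<Sum>p<N. lin (\<lambda>a. lin (\<lambda>b. f (a @ b)) (B p l)) (A k p))"
proof -
  have "lin f (gm_mult N A B k l) = sum_list (map (\<lambda>p. lin f (gr_mult (A k p) (B p l))) [0..<N])"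
    by (simp add: gm_mult_def lin_concat comp_def)
  also have "\<dots> = (\<Sum>p<N. lin f (gr_mult (A k p) (B p l)))"
    by (simp add: sum_list_distinct_conv_sum_set atLeast0LessThan)
  finally show ?thesis by (simp add: lin_gr_mult)
qed

lemma lin_gm_one: "lin f (gm_one k l) = (if k = l then f [] else 0)"
  by (simp add: gm_one_def)

lemma lin_gm_assoc: "lin f (gm_mult N A (gm_mult N B C) k l) = lin f (gm_mult N (gm_mult N A B) C k l)"
proof -
  have "lin f (gm_mult N A (gm_mult N B C) k l) =
     (\<Sum>p<N. lin (\<lambda>a. \<Sum>q<N. lin (\<lambda>b. lin (\<lambda>c. f (a @ b @ c)) (C q l)) (B p q)) (A k p))"
    by (simp add: lin_gm)
  also have "\<dots> = (\<Sum>p<N. \<Sum>q<N. lin (\<lambda>a. lin (\<lambda>b. lin (\<lambda>c. f (a @ b @ c)) (C q l)) (B p q)) (A k p))"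
    by (simp add: lin_sum)
  also have "\<dots> = (\<Sum>q<N. \<Sum>p<N. lin (\<lambda>a. lin (\<lambda>b. lin (\<lambda>c. f (a @ b @ c)) (C q l)) (B p q)) (A k p))"
    by (rule sum.swap)
  also have "\<dots> = lin f (gm_mult N (gm_mult N A B) C k l)"
    by (simp add: lin_gm lin_sum)
  finally show ?thesis .
qed

lemma lin_gm_one_left: "k < N \<Longrightarrow> lin f (gm_mult N gm_one B k l) = lin f (B k l)"
  by (simp add: lin_gm lin_gm_one)

definition inv_f :: "nat \<Rightarrow> (bword \<Rightarrow> complex) \<Rightarrow> bool" where
  "inv_f M f \<longleftrightarrow> (\<forall>u v. beq M u v \<longrightarrow> f u = f v)"

definition meq :: "nat \<Rightarrow> nat \<Rightarrow> grmat \<Rightarrow> grmat \<Rightarrow> bool" where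
  "meq M N A B \<longleftrightarrow> (\<forall>f. inv_f M f \<longrightarrow> (\<forall>k<N. \<forall>l<N. lin f (A k l) = lin f (B k l)))"

lemma meq_refl: "meq M N A A" by (simp add: meq_def)
lemma meq_sym: "meq M N A B \<Longrightarrow> meq M N B A" by (simp add: meq_def)
lemma meq_trans: "meq M N A B \<Longrightarrow> meq M N B C \<Longrightarrow> meq M N A C" by (simp add: meq_def)

lemma inv_f_app: "inv_f M f \<Longrightarrow> inv_f M (\<lambda>v. f (u @ v))"
  unfolding inv_f_def using beq_appL by blast

lemma inv_f_lin: assumes "inv_f M f" shows "inv_f M (\<lambda>a. lin (\<lambda>b. f (a @ b)) B)"
  unfolding inv_f_def
proof (intro allI impI)
  fix u v assume "beq M u v"
  then have "\<And>b. f (u @ b) = f (v @ b)" using assms beq_appR unfolding inv_f_def by blast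
  then show "lin (\<lambda>b. f (u @ b)) B = lin (\<lambda>b. f (v @ b)) B" by (rule lin_cong)
qed

lemma meqD: "meq M N A B \<Longrightarrow> inv_f M f \<Longrightarrow> k < N \<Longrightarrow> l < N \<Longrightarrow> lin f (A k l) = lin f (B k l)"
  by (simp add: meq_def)

lemma meq_mult:
  assumes "meq M N A A'" "meq M N B B'"
  shows "meq M N (gm_mult N A B) (gm_mult N A' B')"
  unfolding meq_def
proof (intro allI impI)
  fix f k l assume f: "inv_f M f" and kl: "k < N" "l < N"
  have "lin f (gm_mult N A B k l) = (\<Sum>p<N. lin (\<lambda>a. lin (\<lambda>b. f (a @ b)) (B p l)) (A k p))"
    by (rule lin_gm)
  also have "\<dots> = (\<Sum>p<N. lin (\<lambda>a. lin (\<lambda>b. f (a @ b)) (B p l)) (A' k p))"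
    by (rule sum.cong[OF HOL.refl], rule meqD[OF assms(1) inv_f_lin[OF f] kl(1)]) simp
  also have "\<dots> = (\<Sum>p<N. lin (\<lambda>a. lin (\<lambda>b. f (a @ b)) (B' p l)) (A' k p))"
    by (rule sum.cong[OF HOL.refl], rule lin_cong, rule meqD[OF assms(2) inv_f_app[OF f] _ kl(2)]) simp
  also have "\<dots> = lin f (gm_mult N A' B' k l)" by (rule lin_gm[symmetric])
  finally show "lin f (gm_mult N A B k l) = lin f (gm_mult N A' B' k l)" .
qed

lemma phi_append: "k < N \<Longrightarrow> lin f (phi N (u @ v) k l) = lin f (gm_mult N (phi N u) (phi N v) k l)"
proof (induction u arbitrary: f k l)
  case Nil then show ?case by (simp add: lin_gm_one_left)
next
  case (Cons x u)
  have "lin f (phi N ((x # u) @ v) k l) = (\<Sum>p<N. lin (\<lambda>a. lin (\<lambda>b. f (a @ b)) (phi N (u @ v) p l)) (phi_gen N x k p))"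
    by (simp add: lin_gm)
  also have "\<dots> = (\<Sum>p<N. lin (\<lambda>a. lin (\<lambda>b. f (a @ b)) (gm_mult N (phi N u) (phi N v) p l)) (phi_gen N x k p))"
    by (rule sum.cong[OF HOL.refl], rule lin_cong, rule Cons.IH) simp
  also have "\<dots> = lin f (gm_mult N (phi_gen N x) (gm_mult N (phi N u) (phi N v)) k l)"
    by (simp add: lin_gm)
  also have "\<dots> = lin f (gm_mult N (phi N (x # u)) (phi N v) k l)"
    by (simp add: lin_gm_assoc)
  finally show ?case .
qed

lemma meq_phi_append: "meq M N (phi N (u @ v)) (gm_mult N (phi N u) (phi N v))"
  by (simp add: meq_def phi_append)




lemma sum_one: "a < (N::nat) \<Longrightarrow> (\<Sum>p<N. (if p = a then X else 0)) = (X::complex)"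
  by (subst sum.delta) auto

lemma sum_two: "a \<noteq> b \<Longrightarrow> a < (N::nat) \<Longrightarrow> b < N \<Longrightarrow>
  (\<Sum>p<N. (if p = a then X else if p = b then Y else 0)) = X + (Y::complex)"
proof -
  assume h: "a \<noteq> b" "a < N" "b < N"
  have "(\<Sum>p<N. (if p = a then X else if p = b then Y else 0)) = (\<Sum>p<N. (if p = a then X else 0) + (if p = b then Y else 0))"
    using h by (intro sum.cong) auto
  also have "\<dots> = X + Y" using h by (simp only: sum.distrib sum_one)
  finally show ?thesis .
qed

lemma rowT:
  assumes i: "1 \<le> i" "i < N" and k: "k < N"
  shows "lin f (gm_mult N (phi_gen N (i, True)) B k l) =
   (if k = i - 1 then lin (\<lambda>v. f ((i, True) # gword N i True @ v)) (B i l)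
    else if k = i then lin (\<lambda>v. f ((i, True) # v)) (B (i - 1) l) + lin (\<lambda>v. f ((i, True) # v)) (B i l)
                       - lin (\<lambda>v. f ((i, True) # gword N i True @ v)) (B i l)
    else lin (\<lambda>v. f ((i, True) # v)) (B k l))"
proof -
  let ?T = "\<lambda>p. lin (\<lambda>w. lin (\<lambda>b. f ((i, True) # w @ b)) (B p l)) (Dmat N i k p)"
  have e: "lin f (gm_mult N (phi_gen N (i, True)) B k l) = (\<Sum>p<N. ?T p)"
    by (simp add: lin_gm phi_gen_def lin_gr_lmul)
  show ?thesis
  proof (cases "k = i - 1")
    case True
    have "?T p = (if p = i then lin (\<lambda>v. f ((i, True) # gword N i True @ v)) (B i l) else 0)" for p
      using True i by (auto simp: Dmat_def)
    then show ?thesis using e True i by (simp add: sum_one)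
  next
    case F1: False
    show ?thesis
    proof (cases "k = i")
      case True
      have "?T p = (if p = i - 1 then lin (\<lambda>v. f ((i, True) # v)) (B (i - 1) l)
        else if p = i then lin (\<lambda>v. f ((i, True) # v)) (B i l) - lin (\<lambda>v. f ((i, True) # gword N i True @ v)) (B i l) else 0)" for p
        using True i by (auto simp: Dmat_def)
      then show ?thesis using e True i F1 by (simp add: sum_two)
    next
      case False
      have "?T p = (if p = k then lin (\<lambda>v. f ((i, True) # v)) (B k l) else 0)" for p
        using False F1 i by (auto simp: Dmat_def)
      then show ?thesis using e False F1 k by (simp add: sum_one)
    qed
  qed
qed

lemma rowF:
  assumes i: "1 \<le> i" "i < N" and k: "k < N"
  shows "lin f (gm_mult N (phi_gen N (i, False)) B k l) =
   (if k = i - 1 then lin (\<lambda>v. f ((i, False) # v)) (B (i - 1) l) - lin (\<lambda>v. f (gword N i False @ (i, False) # v)) (B (i - 1) l)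
                     + lin (\<lambda>v. f ((i, False) # v)) (B i l)
    else if k = i then lin (\<lambda>v. f (gword N i False @ (i, False) # v)) (B (i - 1) l)
    else lin (\<lambda>v. f ((i, False) # v)) (B k l))"
proof -
  let ?T = "\<lambda>p. lin (\<lambda>w. lin (\<lambda>b. f (w @ (i, False) # b)) (B p l)) (Dinv N i k p)"
  have e: "lin f (gm_mult N (phi_gen N (i, False)) B k l) = (\<Sum>p<N. ?T p)"
    by (simp add: lin_gm phi_gen_def lin_gr_rmul)
  show ?thesis
  proof (cases "k = i - 1")
    case True
    have "?T p = (if p = i - 1 then lin (\<lambda>v. f ((i, False) # v)) (B (i - 1) l) - lin (\<lambda>v. f (gword N i False @ (i, False) # v)) (B (i - 1) l)
       else if p = i then lin (\<lambda>v. f ((i, False) # v)) (B i l) else 0)" for p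
      using True i by (auto simp: Dinv_def)
    then show ?thesis using e True i by (simp add: sum_two)
  next
    case F1: False
    show ?thesis
    proof (cases "k = i")
      case True
      have "?T p = (if p = i - 1 then lin (\<lambda>v. f (gword N i False @ (i, False) # v)) (B (i - 1) l) else 0)" for p
        using True i by (auto simp: Dinv_def)
      then show ?thesis using e True i F1 by (simp add: sum_one)
    next
      case False
      have "?T p = (if p = k then lin (\<lambda>v. f ((i, False) # v)) (B k l) else 0)" for p
        using False F1 i by (auto simp: Dinv_def)
      then show ?thesis using e False F1 k by (simp add: sum_one)
    qed
  qed
qed




lemma invD: "inv_f M f \<Longrightarrow> beq M u v \<Longrightarrow> f u = f v" by (simp add: inv_f_def)

lemma f_cancel: "inv_f M f \<Longrightarrow> 1 \<le> i \<Longrightarrow> i < M \<Longrightarrow> f (x @ (i, b) # (i, \<not> b) # y) = f (x @ y)"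
  by (rule invD, assumption, rule step_del)

lemma f_gg: "inv_f (Suc N) f \<Longrightarrow> 1 \<le> i \<Longrightarrow> i \<le> N \<Longrightarrow> f (x @ gword N i True @ gword N i False @ y) = f (x @ y)"
  using beq_cx[OF beq_winv_right[OF gword_bwords[of i N True]], of x y]
  by (intro invD) (auto simp: gword_False)

lemma f_gg': "inv_f (Suc N) f \<Longrightarrow> 1 \<le> i \<Longrightarrow> i \<le> N \<Longrightarrow> f (x @ gword N i False @ gword N i True @ y) = f (x @ y)"
  using beq_cx[OF beq_winv_left[OF gword_bwords[of i N True]], of x y]
  by (intro invD) (auto simp: gword_False)

lemma phi_cancel:
  assumes i: "1 \<le> i" "i < N"
  shows "meq (Suc N) N (phi N [(i, b), (i, \<not> b)]) (phi N [])"
  unfolding meq_def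
proof (intro allI impI)
  fix f k l assume f: "inv_f (Suc N) f" and kl: "k < N" "l < N"
  have c1: "f [(i, True), (i, False)] = f []" using f_cancel[OF f, of i "[]" True "[]"] i by simp
  have c2: "f [(i, False), (i, True)] = f []" using f_cancel[OF f, of i "[]" False "[]"] i by simp
  have c3: "f ((i, True) # gword N i True @ gword N i False @ [(i, False)]) = f []"
    using f_gg[OF f, of i "[(i, True)]" "[(i, False)]"] c1 i by simp
  have c4: "f (gword N i False @ (i, False) # (i, True) # gword N i True) = f []"
    using f_cancel[OF f, of i "gword N i False" False "gword N i True"] f_gg'[OF f, of i "[]" "[]"] i by simp
  show "lin f (phi N [(i, b), (i, \<not> b)] k l) = lin f (phi N [] k l)"
    using i kl c1 c2 c3 c4 by (cases b; cases "l = i"; cases "l = i - 1"; cases "k = i"; cases "k = i - 1") (simp_all add: rowT rowF lin_gm_one)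
qed

lemma lin_gm_one': "lin f (gm_one k l) = (if k = l then 1 else 0) * f []"
  by (simp add: gm_one_def)

lemma rowT1: "1 \<le> i \<Longrightarrow> i < N \<Longrightarrow> k = i - 1 \<Longrightarrow>
  lin f (gm_mult N (phi_gen N (i, True)) B k l) = lin (\<lambda>v. f ((i, True) # gword N i True @ v)) (B i l)"
  using rowT[of i N k f B l] by (simp split: if_splits)
lemma rowT2: "1 \<le> i \<Longrightarrow> i < N \<Longrightarrow> k = i \<Longrightarrow>
  lin f (gm_mult N (phi_gen N (i, True)) B k l) = lin (\<lambda>v. f ((i, True) # v)) (B (i - 1) l) + lin (\<lambda>v. f ((i, True) # v)) (B i l)
                       - lin (\<lambda>v. f ((i, True) # gword N i True @ v)) (B i l)"
  using rowT[of i N k f B l] by (simp split: if_splits)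
lemma rowT3: "1 \<le> i \<Longrightarrow> i < N \<Longrightarrow> k < N \<Longrightarrow> k \<noteq> i - 1 \<Longrightarrow> k \<noteq> i \<Longrightarrow>
  lin f (gm_mult N (phi_gen N (i, True)) B k l) = lin (\<lambda>v. f ((i, True) # v)) (B k l)"
  using rowT[of i N k f B l] by (simp split: if_splits)

lemma phi_comm:
  assumes i: "1 \<le> i" "i < N" and j: "1 \<le> j" "j < N" and ij: "i + 1 < j"
  shows "meq (Suc N) N (phi N [(i, True), (j, True)]) (phi N [(j, True), (i, True)])"
  unfolding meq_def
proof (intro allI impI)
  fix f k l assume f: "inv_f (Suc N) f" and kl: "k < N" "l < N"
  let ?x = "gword N i True" and ?z = "gword N j True"
  have cm: "beq (Suc N) [(i, True), (j, True)] [(j, True), (i, True)]"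
    using beq_comm_gen[of i "Suc N" j] i j ij by simp
  have d1: "f [(i, True), (j, True)] = f [(j, True), (i, True)]" by (rule invD[OF f cm])
  have "beq (Suc N) ((i, True) # ?x @ [(j, True)]) ([(i, True)] @ ((j, True) # ?x) @ [])"
    using beq_cx[OF R3[of i N j], of "[(i, True)]" "[]"] i j ij by simp
  also have "beq (Suc N) \<dots> ([] @ [(j, True), (i, True)] @ ?x)"
    using beq_cx[OF cm, of "[]" ?x] by simp
  finally have b2: "beq (Suc N) ((i, True) # ?x @ [(j, True)]) ((j, True) # (i, True) # ?x)" by simp
  have d2: "f ((i, True) # ?x @ [(j, True)]) = f ((j, True) # (i, True) # ?x)" by (rule invD[OF f b2])
  have "beq (Suc N) ((j, True) # ?z @ [(i, True)]) ([(j, True)] @ ((i, True) # ?z) @ [])"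
    using beq_cx[OF R3[of j N i], of "[(j, True)]" "[]"] i j ij by simp
  also have "beq (Suc N) \<dots> ([] @ [(i, True), (j, True)] @ ?z)"
    using beq_cx[OF beq.sym[OF cm], of "[]" ?z] by simp
  finally have b3: "beq (Suc N) ((j, True) # ?z @ [(i, True)]) ((i, True) # (j, True) # ?z)" by simp
  have d3: "f ((i, True) # (j, True) # ?z) = f ((j, True) # ?z @ [(i, True)])" by (rule invD[OF f beq.sym[OF b3]])
  show "lin f (phi N [(i, True), (j, True)] k l) = lin f (phi N [(j, True), (i, True)] k l)"
  proof -
    consider "k = i - 1" | "k = i" | "k = j - 1" | "k = j" | "k \<noteq> i - 1" "k \<noteq> i" "k \<noteq> j - 1" "k \<noteq> j" by blast
    then show ?thesis using i j ij kl d1 d2 d3 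
      by cases (simp_all add: rowT1 rowT2 rowT3 lin_gm_one' split del: if_split)
  qed
qed

lemma phi_braid:
  assumes i: "1 \<le> i" "Suc i < N"
  shows "meq (Suc N) N (phi N [(i, True), (Suc i, True), (i, True)]) (phi N [(Suc i, True), (i, True), (Suc i, True)])"
  unfolding meq_def
proof (intro allI impI)
  fix f k l assume f: "inv_f (Suc N) f" and kl: "k < N" "l < N"
  let ?x = "gword N i True" and ?y = "gword N (Suc i) True" and ?X = "gword N i False"
  let ?A = "(i, True)" and ?B = "(Suc i, True)"
  have r1: "beq (Suc N) (?y @ [?A]) (?A # ?x)" using R1[of i N] i by simp
  have r3: "beq (Suc N) (?x @ [?B]) (?B # ?x)" using R3[of i N "Suc i"] i by simp
  have r2: "beq (Suc N) (?x @ [?A]) (?A # ?x @ ?y @ ?X)" using R2[of i N] i by simp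
  have br: "beq (Suc N) [?A, ?B, ?A] [?B, ?A, ?B]" using beq.braid[of i "Suc N"] i by simp
  have ea: "f [?A, ?B, ?A] = f [?B, ?A, ?B]" by (rule invD[OF f br])
  have bd1: "beq (Suc N) (?A # ?B # ?y @ [?A]) (?B # ?A # ?B # ?x)"
  proof -
    have "beq (Suc N) (?A # ?B # ?y @ [?A]) ([?A, ?B] @ (?A # ?x) @ [])"
      using beq_cx[OF r1, of "[?A, ?B]" "[]"] by simp
    also have "beq (Suc N) \<dots> ([] @ [?B, ?A, ?B] @ ?x)"
      using beq_cx[OF br, of "[]" ?x] by simp
    finally show ?thesis by simp
  qed
  have bd2: "beq (Suc N) (?B # ?y @ [?A, ?B]) (?B # ?A # ?B # ?x)"
  proof -
    have "beq (Suc N) (?B # ?y @ [?A, ?B]) ([?B] @ (?A # ?x) @ [?B])"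
      using beq_cx[OF r1, of "[?B]" "[?B]"] by simp
    also have "beq (Suc N) \<dots> ([?B, ?A] @ (?B # ?x) @ [])"
      using beq_cx[OF r3, of "[?B, ?A]" "[]"] by simp
    finally show ?thesis by simp
  qed
  have ed: "f (?A # ?B # ?y @ [?A]) = f (?B # ?y @ [?A, ?B])"
    by (rule invD[OF f beq.trans[OF bd1 beq.sym[OF bd2]]])
  have bc: "beq (Suc N) (?A # ?B # ?A # ?x) (?B # ?A # ?B # ?x)"
    using beq_cx[OF br, of "[]" ?x] by simp
  have ec: "f (?A # ?B # ?A # ?x) = f (?B # ?y @ [?A, ?B])"
    by (rule invD[OF f beq.trans[OF bc beq.sym[OF bd2]]])
  have bf: "beq (Suc N) (?B # ?A # ?x @ ?B # ?y) (?B # ?y @ ?A # ?B # ?y)"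
    using beq_cx[OF beq.sym[OF r1], of "[?B]" "?B # ?y"] by simp
  have ef: "f (?B # ?A # ?x @ ?B # ?y) = f (?B # ?y @ ?A # ?B # ?y)" by (rule invD[OF f bf])
  have be: "beq (Suc N) (?A # ?x @ ?B # ?y @ [?A]) (?B # ?A # ?x @ ?B # ?y)"
  proof -
    have "beq (Suc N) (?A # ?x @ ?B # ?y @ [?A]) ((?A # ?x @ [?B]) @ (?A # ?x) @ [])"
      using beq_cx[OF r1, of "?A # ?x @ [?B]" "[]"] by simp
    also have "beq (Suc N) \<dots> ([?A] @ (?B # ?x) @ ?A # ?x)"
      using beq_cx[OF r3, of "[?A]" "?A # ?x"] by simp
    also have "beq (Suc N) \<dots> ([?A, ?B] @ (?A # ?x @ ?y @ ?X) @ ?x)"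
      using beq_cx[OF r2, of "[?A, ?B]" "?x"] by simp
    also have "beq (Suc N) \<dots> ([?A, ?B, ?A] @ ?x @ ?y)"
      using f_gg' beq_cx[OF beq_winv_left[OF gword_bwords[of i N True]], of "[?A, ?B, ?A] @ ?x @ ?y" "[]"] i
      by (simp add: gword_False)
    also have "beq (Suc N) \<dots> ([?B, ?A, ?B] @ ?x @ ?y)"
      using beq_cx[OF br, of "[]" "?x @ ?y"] by simp
    also have "beq (Suc N) \<dots> ([?B, ?A] @ (?B # ?x) @ ?y)" by simp (rule beq.refl)
    also have "beq (Suc N) \<dots> ([?B, ?A] @ (?x @ [?B]) @ ?y)"
      by (rule beq_cx[OF beq.sym[OF r3]])
    finally show ?thesis by simp
  qed
  have ee: "f (?A # ?x @ ?B # ?y @ [?A]) = f (?B # ?y @ ?A # ?B # ?y)"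
    using invD[OF f be] ef by simp
  show "lin f (phi N [?A, ?B, ?A] k l) = lin f (phi N [?B, ?A, ?B] k l)"
  proof -
    consider "k = i - 1" | "k = i" | "k = Suc i" | "k \<noteq> i - 1" "k \<noteq> i" "k \<noteq> Suc i" by blast
    then show ?thesis using i kl ea ec ed ee ef
      by cases (simp_all add: rowT1 rowT2 rowT3 lin_gm_one' split del: if_split)
  qed
qed




declare meq_trans[trans]

lemma phi_beq: "beq N u v \<Longrightarrow> meq (Suc N) N (phi N u) (phi N v)"
proof (induction rule: beq.induct)
  case (refl u) then show ?case by (rule meq_refl)
next
  case (sym u v) then show ?case by (blast intro: meq_sym)
next
  case (trans u v w) then show ?case by (blast intro: meq_trans)
next
  case (ctxt u v x y)
  have "meq (Suc N) N (phi N (x @ u @ y)) (gm_mult N (phi N x) (gm_mult N (phi N u) (phi N y)))"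
    by (rule meq_trans[OF meq_phi_append meq_mult[OF meq_refl meq_phi_append]])
  also have "meq (Suc N) N \<dots> (gm_mult N (phi N x) (gm_mult N (phi N v) (phi N y)))"
    by (rule meq_mult[OF meq_refl meq_mult[OF ctxt.IH meq_refl]])
  also have "meq (Suc N) N \<dots> (phi N (x @ v @ y))"
    by (rule meq_sym, rule meq_trans[OF meq_phi_append meq_mult[OF meq_refl meq_phi_append]])
  finally show ?case .
next
  case (cancel i b) then show ?case by (rule phi_cancel)
next
  case (comm i j) then show ?case by (intro phi_comm) auto
next
  case (braid i) then show ?case using phi_braid[of i N] by simp
qed




lemma swp_swp[simp]: "swp i (swp i x) = x" by (simp add: swp_def)

lemma bperm_append: "bperm (u @ v) = bperm u \<circ> bperm v"
  by (induction u) auto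

lemma bperm_winv: "bperm (w @ winv w) = id"
proof (induction w)
  case Nil then show ?case by simp
next
  case (Cons a w)
  have e: "(a # w) @ winv (a # w) = a # ((w @ winv w) @ [flip a])" by simp
  show ?case unfolding e bperm.simps bperm_append[of "w @ winv w" "[flip a]"] Cons.IH by (auto simp: fun_eq_iff flip_def)
qed

lemma bperm_gword: "bperm (gword N i b) = id"
proof -
  have "bperm (gword N i b) = bperm (cw N i) \<circ> (swp i \<circ> swp i) \<circ> bperm (winv (cw N i))"
    by (simp add: gword_cw bperm_append comp_assoc)
  also have "\<dots> = bperm (cw N i @ winv (cw N i))" by (simp add: bperm_append fun_eq_iff)
  finally show ?thesis by (simp add: bperm_winv)
qed

lemma beq_bperm: "beq M u v \<Longrightarrow> bperm u = bperm v \<and> (u \<in> bwords M \<longleftrightarrow> v \<in> bwords M)"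
proof (induction rule: beq.induct)
  case (ctxt u v x y) then show ?case by (simp add: bperm_append)
next
  case (cancel i b) then show ?case by (simp add: fun_eq_iff)
next
  case (comm i j) then show ?case by (auto simp: fun_eq_iff swp_def)
next
  case (braid i) then show ?case by (auto simp: fun_eq_iff swp_def)
qed auto

lemma Bnj_append: assumes "u \<in> Bnj n j" "v \<in> Bnj n j" shows "u @ v \<in> Bnj n j"
proof -
  have "bperm (u @ v) ` {1..n} = bperm u ` (bperm v ` {1..n})" by (simp add: bperm_append image_comp)
  then show ?thesis using assms by (simp add: Bnj_def)
qed

lemma Bnj_beq: "beq (n + j) u v \<Longrightarrow> u \<in> Bnj n j \<Longrightarrow> v \<in> Bnj n j"
  using beq_bperm[of "n + j" u v] by (simp add: Bnj_def)

lemma Bnj_Nil[simp]: "[] \<in> Bnj n j" by (simp add: Bnj_def)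

lemma pg_words:
  assumes "(a, u) \<in> set (phi_gen N x k p)"
  shows "u = [x] \<or> u = x # gword N (fst x) True \<or> u = gword N (fst x) False @ [x]"
  using assms by (cases x; cases "snd x") (auto simp: phi_gen_def gr_lmul_def gr_rmul_def Dmat_def Dinv_def split: if_splits)

lemma gm_mult_words:
  assumes "(c, w) \<in> set (gm_mult N A B k l)"
  shows "\<exists>p a u b v. (a, u) \<in> set (A k p) \<and> (b, v) \<in> set (B p l) \<and> w = u @ v"
  using assms by (auto simp: gm_mult_def gr_mult_def) blast

lemma phi_words:
  assumes "\<beta> \<in> bwords N" "(c, w) \<in> set (phi N \<beta> k l)"
  shows "w \<in> bwords (Suc N) \<and> bperm w = bperm \<beta>"
  using assms
proof (induction \<beta> arbitrary: c w k l)
  case Nil then show ?case by (auto simp: gm_one_def split: if_splits)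
next
  case (Cons x \<beta>)
  from gm_mult_words[of c w N "phi_gen N x" "phi N \<beta>" k l] Cons.prems
  obtain p a u b v where h: "(a, u) \<in> set (phi_gen N x k p)" "(b, v) \<in> set (phi N \<beta> p l)" "w = u @ v"
    by auto
  have v: "v \<in> bwords (Suc N) \<and> bperm v = bperm \<beta>" using Cons.IH[OF _ h(2)] Cons.prems by simp
  have x: "1 \<le> fst x" "fst x < N" using Cons.prems by auto
  have u: "u \<in> bwords (Suc N) \<and> bperm u = swp (fst x)"
    using pg_words[OF h(1)] x gword_bwords[of "fst x" N]
    by (auto simp: bperm_append bperm_gword)
  show ?case using u v h(3) by (simp add: bperm_append)
qed

lemma lin_cong_set: "(\<And>c w. (c, w) \<in> set A \<Longrightarrow> f w = g w) \<Longrightarrow> lin f A = lin g A"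
proof (induction A)
  case Nil then show ?case by simp
next
  case (Cons x A)
  obtain c w where x: "x = (c, w)" by (cases x)
  have "f w = g w" using Cons.prems x by auto
  moreover have "lin f A = lin g A" using Cons by auto
  ultimately show ?case by (simp add: x)
qed

lemma tau_lin_Cons: "tau_lin d \<tau> ((c, w) # A) = smult_mat (of_int c) (\<tau> w) + tau_lin d \<tau> A"
  by (simp add: tau_lin_def)

lemma tau_lin_carrier_idx:
  assumes "\<And>c w. (c, w) \<in> set A \<Longrightarrow> \<tau> w \<in> carrier_mat d d"
  shows "tau_lin d \<tau> A \<in> carrier_mat d d \<and> (\<forall>a<d. \<forall>b<d. tau_lin d \<tau> A $$ (a, b) = lin (\<lambda>w. \<tau> w $$ (a, b)) A)"
  using assms
proof (induction A)
  case Nil then show ?case by (simp add: tau_lin_def)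
next
  case (Cons x A)
  obtain c w where x: "x = (c, w)" by (cases x)
  have w: "\<tau> w \<in> carrier_mat d d" using Cons.prems x by auto
  have IH: "tau_lin d \<tau> A \<in> carrier_mat d d \<and> (\<forall>a<d. \<forall>b<d. tau_lin d \<tau> A $$ (a, b) = lin (\<lambda>w. \<tau> w $$ (a, b)) A)"
    using Cons by auto
  show ?case using w IH by (auto simp: x tau_lin_Cons)
qed

lemma lin_mult_const: "lin (\<lambda>w. c * g w) A = c * lin g A"
  by (induction A) (auto simp: algebra_simps)
lemma lin_mult_const2: "lin (\<lambda>w. g w * c) A = lin g A * c"
  by (induction A) (auto simp: algebra_simps)

lemma sum_blocks: fixes N d :: nat and g :: "nat \<Rightarrow> 'a::comm_monoid_add"
  shows "(\<Sum>c<N*d. g c) = (\<Sum>p<N. \<Sum>e<d. g (p*d + e))"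
proof -
  have "(\<Sum>c<N*d. g c) = (\<Sum>p<N. sum g {p*d..<p*d+d})" using sum.nat_group[of g d N] by simp
  also have "\<dots> = (\<Sum>p<N. \<Sum>e<d. g (p*d + e))"
  proof (rule sum.cong[OF HOL.refl])
    fix p
    show "sum g {p*d..<p*d+d} = (\<Sum>e<d. g (p*d + e))"
      by (rule sum.reindex_bij_witness[of _ "\<lambda>e. p*d + e" "\<lambda>c. c - p*d"]) auto
  qed
  finally show ?thesis .
qed




lemma mat_mult_entry:
  assumes "A \<in> carrier_mat m m" "B \<in> carrier_mat m m" "x < m" "y < m"
  shows "(A * B) $$ (x, y) = (\<Sum>e<m. A $$ (x, e) * B $$ (e, y))"
  using assms by (auto simp: scalar_prod_def atLeast0LessThan intro!: sum.cong)

lemma rep_plus_is_rep: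
  assumes tau: "is_rep (Bnj n (Suc j)) (n + Suc j) d \<tau>"
  shows "is_rep (Bnj n j) (n + j) ((n + j) * d) (rep_plus (n + j) d \<tau>)"
proof -
  define N where "N = n + j"
  define G' where "G' = Bnj n (Suc j)"
  define F where "F = (\<lambda>x y w. if w \<in> G' then \<tau> w $$ (x, y) else (0::complex))"
  have tc: "\<And>w. w \<in> G' \<Longrightarrow> \<tau> w \<in> carrier_mat d d" and t1: "\<tau> [] = 1\<^sub>m d"
    and tm: "\<And>u v. u \<in> G' \<Longrightarrow> v \<in> G' \<Longrightarrow> \<tau> (u @ v) = \<tau> u * \<tau> v"
    and tb: "\<And>u v. u \<in> G' \<Longrightarrow> v \<in> G' \<Longrightarrow> beq (Suc N) u v \<Longrightarrow> \<tau> u = \<tau> v"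
    using tau by (auto simp: is_rep_def G'_def N_def)
  have Finv: "inv_f (Suc N) (F x y)" for x y
    unfolding inv_f_def F_def
  proof (intro allI impI)
    fix u v assume b: "beq (Suc N) u v"
    have "u \<in> G' \<longleftrightarrow> v \<in> G'"
      using Bnj_beq[of n "Suc j" u v] Bnj_beq[of n "Suc j" v u] b beq.sym[OF b] by (auto simp: G'_def N_def)
    then show "(if u \<in> G' then \<tau> u $$ (x, y) else 0) = (if v \<in> G' then \<tau> v $$ (x, y) else 0)"
      using tb b by auto
  qed
  have words: "w \<in> G'" if "\<beta> \<in> Bnj n j" "(c, w) \<in> set (phi N \<beta> k l)" for \<beta> c w k l
  proof -
    have "\<beta> \<in> bwords N" "bperm \<beta> ` {1..n} = {1..n}" using that(1) by (auto simp: Bnj_def N_def)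
    with phi_words[OF this(1) that(2)] show ?thesis by (simp add: G'_def Bnj_def N_def)
  qed
  have entry: "rep_plus N d \<tau> \<beta> $$ (a, b) = lin (F (a mod d) (b mod d)) (phi N \<beta> (a div d) (b div d))"
    if "\<beta> \<in> Bnj n j" "a < N * d" "b < N * d" for \<beta> a b
  proof -
    have d: "0 < d" using that(2) by (cases d) auto
    have am: "a mod d < d" "b mod d < d" using d by auto
    have ci: "tau_lin d \<tau> (phi N \<beta> (a div d) (b div d)) $$ (a mod d, b mod d)
           = lin (\<lambda>w. \<tau> w $$ (a mod d, b mod d)) (phi N \<beta> (a div d) (b div d))"
      using tau_lin_carrier_idx[of "phi N \<beta> (a div d) (b div d)" \<tau> d] tc words[OF that(1)] am by blast
    also have "\<dots> = lin (F (a mod d) (b mod d)) (phi N \<beta> (a div d) (b div d))"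
      by (rule lin_cong_set) (use words[OF that(1)] in \<open>auto simp: F_def\<close>)
    finally show ?thesis using that by (simp add: rep_plus_def)
  qed
  have divs: "a div d < N" if "a < N * d" for a
    using that by (simp add: less_mult_imp_div_less)
  have part1: "\<forall>w\<in>Bnj n j. rep_plus N d \<tau> w \<in> carrier_mat (N * d) (N * d)"
    by (simp add: rep_plus_def)
  have part2: "rep_plus N d \<tau> [] = 1\<^sub>m (N * d)"
  proof (rule eq_matI)
    fix a b assume ab: "a < dim_row (1\<^sub>m (N * d))" "b < dim_col (1\<^sub>m (N * d))"
    then have ab: "a < N * d" "b < N * d" by auto
    have d: "0 < d" using ab(1) by (cases d) auto
    have "rep_plus N d \<tau> [] $$ (a, b) = (if a div d = b div d then F (a mod d) (b mod d) [] else 0)"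
      using entry[of "[]" a b] ab by (simp add: lin_gm_one)
    also have "\<dots> = (if a = b then 1 else 0)"
    proof (cases "a = b")
      case True then show ?thesis using d by (simp add: F_def G'_def t1)
    next
      case False
      then have "a div d \<noteq> b div d \<or> a mod d \<noteq> b mod d" by (metis div_mult_mod_eq)
      then show ?thesis using d False by (auto simp: F_def G'_def t1)
    qed
    finally show "rep_plus N d \<tau> [] $$ (a, b) = 1\<^sub>m (N * d) $$ (a, b)" using ab by simp
  qed (auto simp: rep_plus_def)
  have part3: "rep_plus N d \<tau> (u @ v) = rep_plus N d \<tau> u * rep_plus N d \<tau> v"
    if uv: "u \<in> Bnj n j" "v \<in> Bnj n j" for u v
  proof (rule eq_matI)
    fix a b assume ab: "a < dim_row (rep_plus N d \<tau> u * rep_plus N d \<tau> v)" "b < dim_col (rep_plus N d \<tau> u * rep_plus N d \<tau> v)"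
    then have ab: "a < N * d" "b < N * d" by (auto simp: rep_plus_def)
    have d: "0 < d" using ab(1) by (cases d) auto
    define a' where "a' = a div d"
    define am where "am = a mod d"
    define b' where "b' = b div d"
    define bm where "bm = b mod d"
    have a': "a' < N" "b' < N" "am < d" "bm < d" using divs ab d by (auto simp: a'_def am_def b'_def bm_def)
    have inner: "lin (\<lambda>x. lin (\<lambda>y. F am bm (x @ y)) (phi N v p b')) (phi N u a' p)
       = (\<Sum>e<d. lin (F am e) (phi N u a' p) * lin (F e bm) (phi N v p b'))" for p
    proof -
      have "lin (\<lambda>x. lin (\<lambda>y. F am bm (x @ y)) (phi N v p b')) (phi N u a' p)
          = lin (\<lambda>x. lin (\<lambda>y. \<Sum>e<d. F am e x * F e bm y) (phi N v p b')) (phi N u a' p)"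
      proof (rule lin_cong_set, rule lin_cong_set)
        fix c x c' y assume x: "(c, x) \<in> set (phi N u a' p)" and y: "(c', y) \<in> set (phi N v p b')"
        have xg: "x \<in> G'" and yg: "y \<in> G'" using words[OF uv(1) x] words[OF uv(2) y] .
        have "x @ y \<in> G'" using Bnj_append xg yg by (simp add: G'_def)
        have "(\<tau> x * \<tau> y) $$ (am, bm) = (\<Sum>e<d. \<tau> x $$ (am, e) * \<tau> y $$ (e, bm))"
          by (rule mat_mult_entry[OF tc[OF xg] tc[OF yg] a'(3,4)])
        then show "F am bm (x @ y) = (\<Sum>e<d. F am e x * F e bm y)"
          using xg yg \<open>x @ y \<in> G'\<close> by (simp add: F_def tm)
      qed
      also have "\<dots> = (\<Sum>e<d. lin (F am e) (phi N u a' p) * lin (F e bm) (phi N v p b'))"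
        by (simp add: lin_sum lin_mult_const lin_mult_const2)
      finally show ?thesis .
    qed
    have "rep_plus N d \<tau> (u @ v) $$ (a, b) = lin (F am bm) (phi N (u @ v) a' b')"
      using entry[of "u @ v" a b] Bnj_append[OF uv] ab by (simp add: a'_def am_def b'_def bm_def)
    also have "\<dots> = lin (F am bm) (gm_mult N (phi N u) (phi N v) a' b')"
      using phi_append a' by blast
    also have "\<dots> = (\<Sum>p<N. \<Sum>e<d. lin (F am e) (phi N u a' p) * lin (F e bm) (phi N v p b'))"
      by (simp add: lin_gm inner)
    also have "\<dots> = (\<Sum>p<N. \<Sum>e<d. rep_plus N d \<tau> u $$ (a, p * d + e) * rep_plus N d \<tau> v $$ (p * d + e, b))"
    proof (rule sum.cong[OF HOL.refl], rule sum.cong[OF HOL.refl])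
      fix p e assume p: "p \<in> {..<N}" and e: "e \<in> {..<d}"
      have pe: "p * d + e < N * d"
      proof -
        have "p * d + e < p * d + d" using e by simp
        also have "\<dots> = Suc p * d" by simp
        also have "\<dots> \<le> N * d" using p by (intro mult_le_mono1) simp
        finally show ?thesis .
      qed
      have dv: "(p * d + e) div d = p" "(p * d + e) mod d = e" using e by auto
      show "lin (F am e) (phi N u a' p) * lin (F e bm) (phi N v p b') =
         rep_plus N d \<tau> u $$ (a, p * d + e) * rep_plus N d \<tau> v $$ (p * d + e, b)"
        using entry[OF uv(1) ab(1) pe] entry[OF uv(2) pe ab(2)] dv by (simp add: a'_def am_def b'_def bm_def)
    qed
    also have "\<dots> = (\<Sum>c<N * d. rep_plus N d \<tau> u $$ (a, c) * rep_plus N d \<tau> v $$ (c, b))"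
      by (rule sum_blocks[symmetric])
    also have "\<dots> = (rep_plus N d \<tau> u * rep_plus N d \<tau> v) $$ (a, b)"
      by (rule mat_mult_entry[symmetric]) (use ab in \<open>auto simp: rep_plus_def\<close>)
    finally show "rep_plus N d \<tau> (u @ v) $$ (a, b) = (rep_plus N d \<tau> u * rep_plus N d \<tau> v) $$ (a, b)" .
  qed (auto simp: rep_plus_def)
  have part4: "rep_plus N d \<tau> u = rep_plus N d \<tau> v" if uv: "u \<in> Bnj n j" "v \<in> Bnj n j" "beq N u v" for u v
  proof (rule eq_matI)
    fix a b assume ab: "a < dim_row (rep_plus N d \<tau> v)" "b < dim_col (rep_plus N d \<tau> v)"
    then have ab: "a < N * d" "b < N * d" by (auto simp: rep_plus_def)
    show "rep_plus N d \<tau> u $$ (a, b) = rep_plus N d \<tau> v $$ (a, b)"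
      using entry[OF uv(1) ab] entry[OF uv(2) ab] meqD[OF phi_beq[OF uv(3)] Finv divs[OF ab(1)] divs[OF ab(2)]]
      by simp
  qed (auto simp: rep_plus_def)
  show ?thesis using part1 part2 part3 part4 by (simp add: is_rep_def N_def)
qed

lemma iter_rep:
  "is_rep (Bnj n j) (n + j) d \<tau> \<Longrightarrow>
   fst (iter_plus n d \<tau> j) = d * (\<Prod>i<j. n + i) \<and> is_rep (Bnj n 0) n (fst (iter_plus n d \<tau> j)) (snd (iter_plus n d \<tau> j))"
proof (induction j arbitrary: d \<tau>)
  case 0 then show ?case by simp
next
  case (Suc j)
  have "is_rep (Bnj n j) (n + j) ((n + j) * d) (rep_plus (n + j) d \<tau>)"
    by (rule rep_plus_is_rep) (use Suc.prems in simp)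
  note IH = Suc.IH[OF this]
  have e: "d * (\<Prod>i<Suc j. n + i) = (n + j) * d * (\<Prod>i<j. n + i)" by (simp add: algebra_simps)
  show ?case unfolding iter_plus.simps e using IH by blast
qed




fun lc :: "(nat \<Rightarrow> bool) \<Rightarrow> nat \<Rightarrow> nat" where
  "lc h 0 = 0"
| "lc h (Suc p) = lc h p + (if h (Suc p) then 0 else 1)"

fun lw :: "(nat \<Rightarrow> bool) \<Rightarrow> bword \<Rightarrow> bword" where
  "lw h [] = []"
| "lw h (x # w) = (if \<not> h (fst x) \<and> \<not> h (Suc (fst x)) then [(lc h (fst x), snd x)] else []) @ lw (h \<circ> swp (fst x)) w"

fun hx :: "(nat \<Rightarrow> bool) \<Rightarrow> bword \<Rightarrow> int" where
  "hx h [] = 0"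
| "hx h (x # w) = (if h (fst x) \<noteq> h (Suc (fst x)) then (if snd x then 1 else -1) else 0) + hx (h \<circ> swp (fst x)) w"

lemma swp_a[simp]: "swp k k = Suc k" and swp_b[simp]: "swp k (Suc k) = k"
  and swp_c: "x \<noteq> k \<Longrightarrow> x \<noteq> Suc k \<Longrightarrow> swp k x = x"
  by (auto simp: swp_def)

lemma lc_agree: "(\<And>q. 1 \<le> q \<Longrightarrow> q \<le> p \<Longrightarrow> g q = h q) \<Longrightarrow> lc g p = lc h p"
  by (induction p) auto

lemma lc_mono: "p \<le> q \<Longrightarrow> lc h p \<le> lc h q"
  by (induction q) (auto simp: le_Suc_eq)

lemma lc_swp: assumes "1 \<le> k" "p < k \<or> k < p" shows "lc (h \<circ> swp k) p = lc h p"
  using assms(2)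
proof (induction p)
  case 0 then show ?case by simp
next
  case (Suc p)
  show ?case
  proof (cases "Suc p < k")
    case True then show ?thesis by (intro lc_agree) (auto simp: swp_def)
  next
    case False
    then have kp: "k < Suc p" using Suc.prems by auto
    show ?thesis
    proof (cases "p = k")
      case True
      obtain k0 where k0: "k = Suc k0" using assms(1) by (cases k) auto
      have "lc (h \<circ> swp k) k0 = lc h k0" by (intro lc_agree) (auto simp: swp_def k0)
      then show ?thesis using True by (simp add: k0 comp_def)
    next
      case False
      then have "k < p" using kp by auto
      then show ?thesis using Suc.IH by (simp add: swp_c)
    qed
  qed
qed

lemma lw_append: "lw h (u @ v) = lw h u @ lw (h \<circ> bperm u) v"
  by (induction u arbitrary: h) (auto simp: comp_assoc)

lemma hx_append: "hx h (u @ v) = hx h u + hx (h \<circ> bperm u) v"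
  by (induction u arbitrary: h) (auto simp: comp_assoc)

lemma valid_bperm: "w \<in> bwords M \<Longrightarrow> lc (h \<circ> bperm w) M = lc h M"
proof (induction w arbitrary: h)
  case Nil then show ?case by simp
next
  case (Cons x w)
  have "lc (h \<circ> bperm (x # w)) M = lc ((h \<circ> swp (fst x)) \<circ> bperm w) M" by (simp add: comp_assoc)
  also have "\<dots> = lc (h \<circ> swp (fst x)) M" by (rule Cons.IH) (use Cons.prems in simp)
  also have "\<dots> = lc h M" using Cons.prems by (intro lc_swp) auto
  finally show ?case .
qed

lemma lc_light: "\<not> h (Suc k) \<Longrightarrow> lc h (Suc k) = Suc (lc h k)" by simp

lemma lw_bwords: "lc h M = m \<Longrightarrow> w \<in> bwords M \<Longrightarrow> lw h w \<in> bwords m"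
proof (induction w arbitrary: h)
  case Nil then show ?case by simp
next
  case (Cons x w)
  obtain k s where x: "x = (k, s)" by (cases x)
  have k: "1 \<le> k" "k < M" using Cons.prems x by auto
  have v: "lc (h \<circ> swp k) M = m" using lc_swp[of k M h] k Cons.prems by simp
  have rest: "lw (h \<circ> swp k) w \<in> bwords m"
    by (rule Cons.IH[OF v]) (use Cons.prems x in simp)
  have letter: "1 \<le> lc h k \<and> lc h k < m" if "\<not> h k" "\<not> h (Suc k)"
  proof -
    obtain k0 where k0: "k = Suc k0" using k by (cases k) auto
    have "lc h (Suc k) \<le> lc h M" using k by (intro lc_mono) simp
    then show ?thesis using that Cons.prems by (simp add: k0)
  qed
  show ?case using rest letter by (auto simp: x)
qed

lemma braid': "1 \<le> a \<Longrightarrow> Suc a < m \<Longrightarrow> beq m [(a, True), (Suc a, True), (a, True)] [(Suc a, True), (a, True), (Suc a, True)]"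
  using beq.braid[of a m] by simp

lemma comm': "1 \<le> a \<Longrightarrow> a + 1 < b \<Longrightarrow> b < m \<Longrightarrow> beq m [(a, True), (b, True)] [(b, True), (a, True)]"
  using beq.comm[of a m b] by simp

lemma beq_lw: "beq M u v \<Longrightarrow> lc h M = m \<Longrightarrow> u \<in> bwords M \<Longrightarrow> beq m (lw h u) (lw h v) \<and> hx h u = hx h v"
proof (induction arbitrary: h rule: beq.induct)
  case (refl u) then show ?case by (simp add: beq.refl)
next
  case (sym u v)
  have "u \<in> bwords M" using beq_bperm[OF sym.hyps] sym.prems by simp
  from sym.IH[OF sym.prems(1) this] show ?case by (simp add: beq.sym)
next
  case (trans u v w)
  have "v \<in> bwords M" using beq_bperm[OF trans.hyps(1)] trans.prems by simp
  then have B: "beq m (lw h v) (lw h w) \<and> hx h v = hx h w" by (rule trans.IH(2)[OF trans.prems(1)])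
  have A: "beq m (lw h u) (lw h v) \<and> hx h u = hx h v" by (rule trans.IH(1)[OF trans.prems])
  show ?case using beq.trans[OF conjunct1[OF A] conjunct1[OF B]] A B by simp
next
  case (ctxt u v x y)
  let ?h1 = "h \<circ> bperm x"
  have bp: "bperm u = bperm v" using beq_bperm[OF ctxt.hyps] by simp
  have v1: "lc ?h1 M = m" using valid_bperm[of x M h] ctxt.prems by simp
  have IH: "beq m (lw ?h1 u) (lw ?h1 v) \<and> hx ?h1 u = hx ?h1 v" by (rule ctxt.IH[OF v1]) (use ctxt.prems in simp)
  show ?case using IH bp by (simp add: lw_append hx_append comp_assoc beq_cx)
next
  case (cancel i b)
  obtain i0 where i0: "i = Suc i0" using cancel.hyps by (cases i) auto
  have s: "lc (h \<circ> swp i) i0 = lc h i0" by (intro lc_agree) (auto simp: swp_def i0)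
  have "lc h (Suc i) \<le> lc h M" using cancel.hyps by (intro lc_mono) simp
  then have bd: "lc h (Suc i) \<le> m" using cancel.prems by simp
  show ?case
  proof (cases "\<not> h i \<and> \<not> h (Suc i)")
    case True
    then have "1 \<le> lc h i" "lc h i < m" using bd by (auto simp: i0)
    moreover have "lc (h \<circ> swp i) i = lc h i" using True s by (simp add: i0 swp_def)
    ultimately show ?thesis using True by (auto simp: beq.cancel)
  next
    case False then show ?thesis by (auto simp: beq.refl)
  qed
next
  case (comm i j)
  have ci: "lc (h \<circ> swp i) j = lc h j" using comm.hyps by (intro lc_swp) auto
  have cj: "lc (h \<circ> swp j) i = lc h i" using comm.hyps by (intro lc_swp) auto
  have hi: "(h \<circ> swp i) j = h j" "(h \<circ> swp i) (Suc j) = h (Suc j)" "(h \<circ> swp j) i = h i" "(h \<circ> swp j) (Suc i) = h (Suc i)"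
    using comm.hyps by (auto simp: swp_def)
  have bounds: "1 \<le> lc h i \<and> lc h i + 1 < lc h j \<and> lc h j < m" if "\<not> h i" "\<not> h (Suc i)" "\<not> h j" "\<not> h (Suc j)"
  proof -
    obtain i0 where i0: "i = Suc i0" using comm.hyps by (cases i) auto
    obtain j0 where j0: "j = Suc j0" using comm.hyps by (cases j) auto
    have "lc h (Suc i) \<le> lc h j0" using comm.hyps j0 by (intro lc_mono) simp
    moreover have "lc h (Suc j) \<le> lc h M" using comm.hyps by (intro lc_mono) simp
    ultimately show ?thesis using that comm.prems by (simp add: i0 j0)
  qed
  show ?case using hi ci cj bounds comm'
    by (auto simp: beq.refl)
next
  case (braid i)
  obtain i0 where i0: "i = Suc i0" using braid.hyps by (cases i) auto
  let ?L = "lc h i0"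
  have s1: "lc (h \<circ> swp i) i0 = ?L" "lc (h \<circ> swp i \<circ> swp (Suc i)) i0 = ?L"
     "lc (h \<circ> swp (Suc i)) i0 = ?L" "lc (h \<circ> swp (Suc i) \<circ> swp i) i0 = ?L"
    by (intro lc_agree, simp add: swp_def i0)+
  have "lc h (Suc (Suc i)) \<le> lc h M" using braid.hyps by (intro lc_mono) simp
  then have bd: "lc h (Suc (Suc i)) \<le> m" using braid.prems by simp
  show ?case using s1 bd braid'[of "Suc ?L" m]
    by (cases "h (Suc i0)"; cases "h (Suc (Suc i0))"; cases "h (Suc (Suc (Suc i0)))")
       (simp_all add: i0 beq.refl swp_def)
qed




definition h0 :: "nat \<Rightarrow> nat \<Rightarrow> bool" where "h0 n p = (1 \<le> p \<and> p \<le> n)"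

definition rhoP :: "nat \<Rightarrow> complex \<Rightarrow> (bword \<Rightarrow> complex mat) \<Rightarrow> bword \<Rightarrow> complex mat" where
  "rhoP n q \<rho> w = (power_int (csqrt q) (hx (h0 n) w)) \<cdot>\<^sub>m \<rho> (lw (h0 n) w)"

lemma lc_h0: "lc (h0 n) p = p - n"
  by (induction p) (auto simp: h0_def)

lemma inj_bperm: "inj (bperm w)"
proof (induction w)
  case Nil then show ?case by simp
next
  case (Cons x w)
  have "inj (swp (fst x))" by (metis injI swp_swp)
  from inj_compose[OF this Cons.IH] show ?case by (simp add: comp_def)
qed

lemma h0_bperm: assumes "u \<in> Bnj n j" shows "h0 n \<circ> bperm u = h0 n"
proof
  fix p
  have im: "bperm u ` {1..n} = {1..n}" using assms by (simp add: Bnj_def)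
  have "bperm u p \<in> {1..n} \<longleftrightarrow> p \<in> {1..n}"
  proof
    assume "bperm u p \<in> {1..n}"
    then obtain q where "q \<in> {1..n}" "bperm u q = bperm u p" using im by (metis imageE)
    then show "p \<in> {1..n}" using inj_bperm[of u] by (metis injD)
  next
    assume "p \<in> {1..n}" then show "bperm u p \<in> {1..n}" using im by blast
  qed
  then show "(h0 n \<circ> bperm u) p = h0 n p" by (simp add: h0_def)
qed

lemma smult_one_mat': "A \<in> carrier_mat d d \<Longrightarrow> (1::complex) \<cdot>\<^sub>m A = A"
  by (intro eq_matI) auto

lemma smult_smult_mat': "(a::complex) \<cdot>\<^sub>m (b \<cdot>\<^sub>m A) = (a * b) \<cdot>\<^sub>m A"
  by (intro eq_matI) auto

lemma smult_mult_both:
  assumes "A \<in> carrier_mat d d" "B \<in> carrier_mat d d"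
  shows "((a::complex) \<cdot>\<^sub>m A) * (b \<cdot>\<^sub>m B) = (a * b) \<cdot>\<^sub>m (A * B)"
proof -
  have "(a \<cdot>\<^sub>m A) * (b \<cdot>\<^sub>m B) = a \<cdot>\<^sub>m (A * (b \<cdot>\<^sub>m B))"
    by (rule mult_smult_assoc_mat) (use assms in auto)
  also have "\<dots> = a \<cdot>\<^sub>m (b \<cdot>\<^sub>m (A * B))" using mult_smult_distrib[OF assms] by simp
  finally show ?thesis by (simp add: smult_smult_mat')
qed

lemma rhoP_props:
  assumes n: "n \<ge> 2" and m: "m \<ge> 1" and q: "q \<noteq> 0" and rho: "is_rep (bwords m) m d \<rho>"
  shows "rho_prime_props n m d q \<rho> (rhoP n q \<rho>)"
proof -
  define r where "r = csqrt q"
  have r: "r \<noteq> 0" "r ^ 2 = q" using q by (auto simp: r_def)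
  have rc: "\<And>w. w \<in> bwords m \<Longrightarrow> \<rho> w \<in> carrier_mat d d" and r1: "\<rho> [] = 1\<^sub>m d"
    and rm: "\<And>u v. u \<in> bwords m \<Longrightarrow> v \<in> bwords m \<Longrightarrow> \<rho> (u @ v) = \<rho> u * \<rho> v"
    and rb: "\<And>u v. u \<in> bwords m \<Longrightarrow> v \<in> bwords m \<Longrightarrow> beq m u v \<Longrightarrow> \<rho> u = \<rho> v"
    using rho by (auto simp: is_rep_def)
  have lcv: "lc (h0 n) (n + m) = m" by (simp add: lc_h0)
  have lwb: "lw (h0 n) w \<in> bwords m" if "w \<in> Bnj n m" for w
    using lw_bwords[OF lcv] that by (simp add: Bnj_def)
  have part1: "\<forall>w\<in>Bnj n m. rhoP n q \<rho> w \<in> carrier_mat d d"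
    using rc lwb by (simp add: rhoP_def)
  have part2: "rhoP n q \<rho> [] = 1\<^sub>m d"
    by (simp add: rhoP_def r1 smult_one_mat'[OF one_carrier_mat])
  have part3: "rhoP n q \<rho> (u @ v) = rhoP n q \<rho> u * rhoP n q \<rho> v" if uv: "u \<in> Bnj n m" "v \<in> Bnj n m" for u v
  proof -
    have hb: "h0 n \<circ> bperm u = h0 n" by (rule h0_bperm[OF uv(1)])
    have A: "\<rho> (lw (h0 n) u) \<in> carrier_mat d d" "\<rho> (lw (h0 n) v) \<in> carrier_mat d d" using rc lwb uv by auto
    have "rhoP n q \<rho> (u @ v) = (power_int r (hx (h0 n) u) * power_int r (hx (h0 n) v)) \<cdot>\<^sub>m (\<rho> (lw (h0 n) u) * \<rho> (lw (h0 n) v))"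
      using lwb uv r(1) by (simp add: rhoP_def lw_append hx_append hb rm power_int_add r_def[symmetric])
    also have "\<dots> = rhoP n q \<rho> u * rhoP n q \<rho> v"
      using A by (simp add: rhoP_def r_def[symmetric] smult_mult_both)
    finally show ?thesis .
  qed
  have part4: "rhoP n q \<rho> u = rhoP n q \<rho> v" if uv: "u \<in> Bnj n m" "v \<in> Bnj n m" "beq (n + m) u v" for u v
  proof -
    have "beq m (lw (h0 n) u) (lw (h0 n) v) \<and> hx (h0 n) u = hx (h0 n) v"
      using beq_lw[OF uv(3) lcv] uv(1) by (simp add: Bnj_def)
    moreover have "\<rho> (lw (h0 n) u) = \<rho> (lw (h0 n) v)"
      using calculation rb[OF lwb[OF uv(1)] lwb[OF uv(2)]] by blast
    ultimately show ?thesis by (simp add: rhoP_def)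
  qed
  have rep: "is_rep (Bnj n m) (n + m) d (rhoP n q \<rho>)"
    using part1 part2 part3 part4 by (simp add: is_rep_def)
  have p1: "\<forall>i\<in>{1..<n}. rhoP n q \<rho> [(i, True)] = 1\<^sub>m d"
    by (auto simp: rhoP_def h0_def r1 smult_one_mat'[OF one_carrier_mat])
  have "swp n n = Suc n" "swp n (Suc n) = n" by (auto simp: swp_def)
  then have p2: "rhoP n q \<rho> [(n, True), (n, True)] = q \<cdot>\<^sub>m 1\<^sub>m d"
    using n r by (simp add: rhoP_def h0_def r1 r_def[symmetric] power2_eq_square)
  have p3: "\<forall>i\<in>{1..<m}. rhoP n q \<rho> [(n + i, True)] = \<rho> [(i, True)]"
  proof
    fix i assume i: "i \<in> {1..<m}"
    then have "[(i, True)] \<in> bwords m" by auto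
    then show "rhoP n q \<rho> [(n + i, True)] = \<rho> [(i, True)]"
      using i rc by (auto simp: rhoP_def h0_def lc_h0 smult_one_mat')
  qed
  show ?thesis using rep p1 p2 p3 by (simp add: rho_prime_props_def)
qed

theorem theorem5p3:
  fixes n m d :: nat and q :: complex and \<rho> :: "bword \<Rightarrow> complex mat"
  assumes "n \<ge> 2" and "m \<ge> 1" and "q \<noteq> 0"
    and "is_rep (bwords m) m d \<rho>"
  shows "(\<exists>\<rho>'. rho_prime_props n m d q \<rho> \<rho>') \<and>
         (\<forall>\<rho>'. rho_prime_props n m d q \<rho> \<rho>' \<longrightarrow>
            fst (iter_plus n d \<rho>' m) = d * (\<Prod>i<m. n + i) \<and>
            is_rep (Bnj n 0) n (d * (\<Prod>i<m. n + i)) (snd (iter_plus n d \<rho>' m)))"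
proof
  show "\<exists>\<rho>'. rho_prime_props n m d q \<rho> \<rho>'" using rhoP_props[OF assms] by blast
next
  show "\<forall>\<rho>'. rho_prime_props n m d q \<rho> \<rho>' \<longrightarrow>
            fst (iter_plus n d \<rho>' m) = d * (\<Prod>i<m. n + i) \<and>
            is_rep (Bnj n 0) n (d * (\<Prod>i<m. n + i)) (snd (iter_plus n d \<rho>' m))"
  proof (intro allI impI)
    fix \<rho>' assume "rho_prime_props n m d q \<rho> \<rho>'"
    then have "is_rep (Bnj n m) (n + m) d \<rho>'" by (simp add: rho_prime_props_def)
    note I = iter_rep[OF this]
    have a: "fst (iter_plus n d \<rho>' m) = d * (\<Prod>i<m. n + i)" using I by blast
    have b: "is_rep (Bnj n 0) n (fst (iter_plus n d \<rho>' m)) (snd (iter_plus n d \<rho>' m))" using I by blast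
    from b have "is_rep (Bnj n 0) n (d * (\<Prod>i<m. n + i)) (snd (iter_plus n d \<rho>' m))" by (simp only: a)
    with a show "fst (iter_plus n d \<rho>' m) = d * (\<Prod>i<m. n + i) \<and>
            is_rep (Bnj n 0) n (d * (\<Prod>i<m. n + i)) (snd (iter_plus n d \<rho>' m))" by blast
  qed
qed


end
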